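(* Let $d$ be a positive integer. If $$4N_{E_7}(2d)>28N_{E_6}(2d)+63N_{D_6}(2d)\quad\text{or}\quad 5N_{E_7}(2d)>28N_{E_6}(2d)+63N_{D_6}(2d)+378N_{D_5}(2d),$$ then there exists a vector $l\in E_8$ with $l^2=2d$ that is orthogonal to at least $2$ and at most $12$ roots of $E_8$.
   Context: $E_8,E_7,E_6,D_6,D_5$ are the positive definite root lattices; a root is a vector of square $2$. For a positive definite lattice $L$, $N_L(2d)$ denotes the number of vectors $v\in L$ with $v^2=2d$. *)

theory Defs
  imports Complex_Main
begin

text \<open>Vectors of R^n are represented as real lists of length n; inner product is the
standard Euclidean one.\<close>

definition ip :: "real list \<Rightarrow> real list \<Rightarrow> real" where
  "ip v w = (\<Sum>i<length v. v ! i * w ! i)"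

definition sqn :: "real list \<Rightarrow> real" where
  "sqn v = ip v v"

definition E8 :: "real list set" where
  "E8 = {v. length v = 8 \<and>
           ((\<forall>i<8. v ! i \<in> \<int>) \<or> (\<forall>i<8. v ! i - 1/2 \<in> \<int>)) \<and>
           (\<Sum>i<8. v ! i) / 2 \<in> \<int>}"

text \<open>E7 = orthogonal complement in E8 of the root (1,-1,0,...,0);
  E6 = orthogonal complement in E8 of the A2 spanned by roots (1,-1,0,..) and (0,1,-1,0,..).\<close>
definition E7 :: "real list set" where
  "E7 = {v \<in> E8. v ! 0 = v ! 1}"

definition E6 :: "real list set" where
  "E6 = {v \<in> E8. v ! 0 = v ! 1 \<and> v ! 1 = v ! 2}"

definition Dn :: "nat \<Rightarrow> real list set" where
  "Dn n = {v. length v = n \<and> (\<forall>i<n. v ! i \<in> \<int>) \<and> (\<Sum>i<n. v ! i) / 2 \<in> \<int>}"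

definition D6 :: "real list set" where "D6 = Dn 6"
definition D5 :: "real list set" where "D5 = Dn 5"

definition NL :: "real list set \<Rightarrow> nat \<Rightarrow> nat" where
  "NL L m = card {v \<in> L. sqn v = real m}"

definition roots :: "real list set \<Rightarrow> real list set" where
  "roots L = {v \<in> L. sqn v = 2}"

end

theory Submission
  imports Defs
begin

definition vadd :: "real list \<Rightarrow> real list \<Rightarrow> real list" where
  "vadd v w = map (\<lambda>i. v!i + w!i) [0..<8]"
definition vsub :: "real list \<Rightarrow> real list \<Rightarrow> real list" where
  "vsub v w = map (\<lambda>i. v!i - w!i) [0..<8]"
definition vneg :: "real list \<Rightarrow> real list" where
  "vneg v = map (\<lambda>i. - v!i) [0..<8]"
definition scal :: "real \<Rightarrow> real list \<Rightarrow> real list" where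
  "scal c v = map (\<lambda>i. c * v!i) [0..<8]"
definition rfl :: "real list \<Rightarrow> real list \<Rightarrow> real list" where
  "rfl a v = vsub v (scal (ip v a) a)"

lemma len_ops[simp]: "length (vadd v w) = 8" "length (vsub v w) = 8" "length (vneg v) = 8"
  "length (scal c v) = 8" "length (rfl a v) = 8"
  by (simp_all add: vadd_def vsub_def vneg_def scal_def rfl_def)

lemma nth_ops[simp]: "i < 8 \<Longrightarrow> vadd v w ! i = v!i + w!i"
  "i < 8 \<Longrightarrow> vsub v w ! i = v!i - w!i"
  "i < 8 \<Longrightarrow> vneg v ! i = - v!i"
  "i < 8 \<Longrightarrow> scal c v ! i = c * v!i"
  by (simp_all add: vadd_def vsub_def vneg_def scal_def)

lemma ip8: "length v = 8 \<Longrightarrow> ip v w = (\<Sum>i<8. v!i * w!i)"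
  by (simp add: ip_def)

lemma ip_comm: "length v = 8 \<Longrightarrow> length w = 8 \<Longrightarrow> ip v w = ip w v"
  by (simp add: ip8 mult.commute)

lemma ip_vadd_l: "ip (vadd v w) u = ip v u + ip w u" if "length v = 8" "length w = 8"
  using that by (simp add: ip8 algebra_simps sum.distrib)
lemma ip_vsub_l: "ip (vsub v w) u = ip v u - ip w u" if "length v = 8" "length w = 8"
  using that by (simp add: ip8 algebra_simps sum_subtractf)
lemma ip_vneg_l: "ip (vneg v) u = - ip v u" if "length v = 8"
  using that by (simp add: ip8 sum_negf)
lemma ip_scal_l: "ip (scal c v) u = c * ip v u" if "length v = 8"
  using that by (simp add: ip8 sum_distrib_left algebra_simps)
lemma ip_vadd_r: "ip u (vadd v w) = ip u v + ip u w" if "length u = 8"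
  using that by (simp add: ip8 algebra_simps sum.distrib)
lemma ip_vsub_r: "ip u (vsub v w) = ip u v - ip u w" if "length u = 8"
  using that by (simp add: ip8 algebra_simps sum_subtractf)
lemma ip_vneg_r: "ip u (vneg v) = - ip u v" if "length u = 8"
  using that by (simp add: ip8 sum_negf)
lemma ip_scal_r: "ip u (scal c v) = c * ip u v" if "length u = 8"
  using that by (simp add: ip8 sum_distrib_left algebra_simps)

lemmas ip_lin = ip_vadd_l ip_vsub_l ip_vneg_l ip_scal_l ip_vadd_r ip_vsub_r ip_vneg_r ip_scal_r

lemma sqn_nonneg: "sqn v \<ge> 0"
  by (simp add: sqn_def ip_def sum_nonneg)

lemma sqn_zero: assumes "length v = 8" "sqn v = 0" "i < 8" shows "v ! i = 0"
proof -
  have "(\<Sum>j<8. v!j * v!j) = 0" using assms by (simp add: sqn_def ip8)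
  then have "\<forall>j\<in>{..<8::nat}. v!j * v!j = 0"
    by (subst sum_nonneg_eq_0_iff[symmetric]) auto
  then show ?thesis using assms(3) by auto
qed

lemma vec_eqI: assumes "length v = 8" "length w = 8" "\<forall>i<8. v!i = w!i" shows "v = w"
  using assms by (simp add: list_eq_iff_nth_eq)

lemma eq_of_sqn_sub: assumes "length v = 8" "length w = 8" "sqn (vsub v w) = 0" shows "v = w"
proof (rule vec_eqI[OF assms(1,2)], intro allI impI)
  fix i :: nat assume i: "i < 8"
  have "vsub v w ! i = 0" using sqn_zero[OF _ assms(3) i] by simp
  then show "v!i = w!i" using i by simp
qed

lemma sqn_vsub: "length v = 8 \<Longrightarrow> length w = 8 \<Longrightarrow> sqn (vsub v w) = sqn v + sqn w - 2 * ip v w"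
  by (simp add: sqn_def ip_lin ip_comm[of w v])
lemma sqn_vadd: "length v = 8 \<Longrightarrow> length w = 8 \<Longrightarrow> sqn (vadd v w) = sqn v + sqn w + 2 * ip v w"
  by (simp add: sqn_def ip_lin ip_comm[of w v])
lemma sqn_vneg: "length v = 8 \<Longrightarrow> sqn (vneg v) = sqn v"
  by (simp add: sqn_def ip_lin)

lemma vneg_vneg: "length v = 8 \<Longrightarrow> vneg (vneg v) = v"
  by (rule vec_eqI) auto

definition intv :: "real list \<Rightarrow> bool" where "intv v = (\<forall>i<8. v!i \<in> \<int>)"
definition halfv :: "real list \<Rightarrow> bool" where "halfv v = (\<forall>i<8. v!i - 1/2 \<in> \<int>)"

lemma E8_iff: "v \<in> E8 \<longleftrightarrow> length v = 8 \<and> (intv v \<or> halfv v) \<and> (\<Sum>i<8. v!i)/2 \<in> \<int>"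
  by (simp add: E8_def intv_def halfv_def)

lemma Ints_half_sub: "a - 1/2 \<in> \<int> \<Longrightarrow> b - 1/2 \<in> \<int> \<Longrightarrow> (a::real) + b \<in> \<int>"
proof -
  assume "a - 1/2 \<in> \<int>" "b - 1/2 \<in> \<int>"
  then have "(a - 1/2) + (b - 1/2) + 1 \<in> \<int>" by (intro Ints_add) auto
  then show ?thesis by simp
qed

lemma E8_vadd: assumes "v \<in> E8" "w \<in> E8" shows "vadd v w \<in> E8"
proof -
  have lv: "length v = 8" and lw: "length w = 8" using assms by (auto simp: E8_iff)
  have sv: "(\<Sum>i<8. v!i)/2 \<in> \<int>" and sw: "(\<Sum>i<8. w!i)/2 \<in> \<int>" using assms by (auto simp: E8_iff)
  have eq: "(\<Sum>i<8. vadd v w!i)/2 = (\<Sum>i<8. v!i)/2 + (\<Sum>i<8. w!i)/2"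
    by (simp add: sum.distrib add_divide_distrib)
  have s: "(\<Sum>i<8. vadd v w!i)/2 \<in> \<int>" unfolding eq using sv sw by (rule Ints_add)
  have t: "intv (vadd v w) \<or> halfv (vadd v w)"
  proof -
    consider "intv v" "intv w" | "intv v" "halfv w" | "halfv v" "intv w" | "halfv v" "halfv w"
      using assms by (auto simp: E8_iff)
    then show ?thesis
    proof cases
      case 1 then show ?thesis by (auto simp: intv_def)
    next
      case 2
      have "halfv (vadd v w)" unfolding halfv_def
      proof (intro allI impI)
        fix i :: nat assume "i < 8"
        then have "v!i + (w!i - 1/2) \<in> \<int>" using 2 by (auto simp: intv_def halfv_def)
        then show "vadd v w ! i - 1/2 \<in> \<int>" using \<open>i<8\<close> by (simp add: algebra_simps)
      qed
      then show ?thesis by simp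
    next
      case 3
      have "halfv (vadd v w)" unfolding halfv_def
      proof (intro allI impI)
        fix i :: nat assume "i < 8"
        then have "(v!i - 1/2) + w!i \<in> \<int>" using 3 by (auto simp: intv_def halfv_def)
        then show "vadd v w ! i - 1/2 \<in> \<int>" using \<open>i<8\<close> by (simp add: algebra_simps)
      qed
      then show ?thesis by simp
    next
      case 4
      have "intv (vadd v w)" unfolding intv_def
        using 4 by (auto simp: halfv_def intro: Ints_half_sub)
      then show ?thesis by simp
    qed
  qed
  show ?thesis using s t by (simp add: E8_iff)
qed

lemma E8_vneg: assumes "v \<in> E8" shows "vneg v \<in> E8"
proof -
  have lv: "length v = 8" using assms by (auto simp: E8_iff)
  have "(\<Sum>i<8. vneg v!i)/2 = - ((\<Sum>i<8. v!i)/2)" by (simp add: sum_negf)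
  then have s: "(\<Sum>i<8. vneg v!i)/2 \<in> \<int>" using assms by (auto simp: E8_iff)
  have "intv (vneg v) \<or> halfv (vneg v)"
  proof (cases "intv v")
    case True then show ?thesis by (auto simp: intv_def)
  next
    case False
    then have h: "halfv v" using assms by (auto simp: E8_iff)
    have "halfv (vneg v)" unfolding halfv_def
    proof (intro allI impI)
      fix i :: nat assume "i < 8"
      then have "v!i - 1/2 \<in> \<int>" using h by (auto simp: halfv_def)
      then have "- (v!i - 1/2) - 1 \<in> \<int>" by (meson Ints_1 Ints_diff Ints_minus)
      then show "vneg v ! i - 1/2 \<in> \<int>" using \<open>i<8\<close> by (simp add: algebra_simps)
    qed
    then show ?thesis by simp
  qed
  then show ?thesis using s by (simp add: E8_iff)
qed

lemma vsub_vadd_vneg: "length w = 8 \<Longrightarrow> vsub v w = vadd v (vneg w)"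
  by (rule vec_eqI) auto

lemma E8_vsub: assumes "v \<in> E8" "w \<in> E8" shows "vsub v w \<in> E8"
proof -
  have "length w = 8" using assms by (simp add: E8_iff)
  then show ?thesis using E8_vadd[OF assms(1) E8_vneg[OF assms(2)]] by (simp add: vsub_vadd_vneg)
qed

lemma E8_scal: assumes "a \<in> E8" "c \<in> \<int>" shows "scal c a \<in> E8"
proof -
  obtain n where c: "c = of_int n" using assms(2) Ints_cases by blast
  have la: "length a = 8" using assms by (auto simp: E8_iff)
  have eq: "(\<Sum>i<8. scal c a!i)/2 = c * ((\<Sum>i<8. a!i)/2)" by (simp add: sum_distrib_left)
  have sa: "(\<Sum>i<8. a!i)/2 \<in> \<int>" using assms by (auto simp: E8_iff)
  have s: "(\<Sum>i<8. scal c a!i)/2 \<in> \<int>" unfolding eq using assms(2) sa by (rule Ints_mult)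
  have "intv (scal c a) \<or> halfv (scal c a)"
  proof (cases "intv a")
    case True then show ?thesis using assms(2) by (auto simp: intv_def)
  next
    case False
    then have h: "halfv a" using assms by (auto simp: E8_iff)
    show ?thesis
    proof (cases "even n")
      case True
      then obtain m where n: "n = 2*m" by blast
      have "intv (scal c a)" unfolding intv_def
      proof (intro allI impI)
        fix i :: nat assume "i < 8"
        then have "of_int n * (a!i - 1/2) + of_int m \<in> \<int>" using h by (auto simp: halfv_def)
        then show "scal c a ! i \<in> \<int>" using \<open>i<8\<close> c n by (simp add: algebra_simps)
      qed
      then show ?thesis by simp
    next
      case False
      then obtain m where n: "n = 2*m+1" using oddE by blast
      have "halfv (scal c a)" unfolding halfv_def
      proof (intro allI impI)
        fix i :: nat assume "i < 8"
        then have "of_int n * (a!i - 1/2) + of_int m \<in> \<int>" using h by (auto simp: halfv_def)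
        then show "scal c a ! i - 1/2 \<in> \<int>" using \<open>i<8\<close> c n by (simp add: algebra_simps)
      qed
      then show ?thesis by simp
    qed
  qed
  then show ?thesis using s by (simp add: E8_iff)
qed

lemma E8_ip_int: assumes "v \<in> E8" "w \<in> E8" shows "ip v w \<in> \<int>"
proof -
  have lv: "length v = 8" and lw: "length w = 8" using assms by (auto simp: E8_iff)
  have sv: "(\<Sum>i<8. v!i)/2 \<in> \<int>" and sw: "(\<Sum>i<8. w!i)/2 \<in> \<int>" using assms by (auto simp: E8_iff)
  have ipv: "ip v w = (\<Sum>i<8. v!i * w!i)" using lv by (simp add: ip8)
  consider "intv v" "intv w" | "intv v" "halfv w" | "halfv v" "intv w" | "halfv v" "halfv w"
    using assms by (auto simp: E8_iff)
  then show ?thesis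
  proof cases
    case 1 then show ?thesis unfolding ipv by (intro Ints_sum) (auto simp: intv_def)
  next
    case 2
    have "(\<Sum>i<8. v!i * w!i) = (\<Sum>i<8. v!i * (w!i - 1/2)) + (\<Sum>i<8. v!i)/2"
      by (simp add: algebra_simps sum.distrib sum_subtractf sum_divide_distrib)
    moreover have "(\<Sum>i<8. v!i * (w!i - 1/2)) \<in> \<int>" using 2 by (intro Ints_sum) (auto simp: intv_def halfv_def)
    ultimately show ?thesis unfolding ipv using sv by simp
  next
    case 3
    have "(\<Sum>i<8. v!i * w!i) = (\<Sum>i<8. (v!i - 1/2) * w!i) + (\<Sum>i<8. w!i)/2"
      by (simp add: algebra_simps sum.distrib sum_subtractf sum_divide_distrib)
    moreover have "(\<Sum>i<8. (v!i - 1/2) * w!i) \<in> \<int>" using 3 by (intro Ints_sum) (auto simp: intv_def halfv_def)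
    ultimately show ?thesis unfolding ipv using sw by simp
  next
    case 4
    have "(\<Sum>i<8. v!i * w!i) = (\<Sum>i<8. (v!i - 1/2) * (w!i - 1/2)) + (\<Sum>i<8. v!i)/2 + (\<Sum>i<8. w!i)/2 - 2"
      by (simp add: algebra_simps sum.distrib sum_subtractf sum_divide_distrib)
    moreover have "(\<Sum>i<8. (v!i - 1/2) * (w!i - 1/2)) \<in> \<int>" using 4 by (intro Ints_sum) (auto simp: halfv_def)
    ultimately show ?thesis unfolding ipv using sv sw by simp
  qed
qed

abbreviation RT :: "real list set" where "RT \<equiv> roots E8"

lemma RT_iff: "r \<in> RT \<longleftrightarrow> r \<in> E8 \<and> sqn r = 2" by (simp add: roots_def)
lemma RT_len: "r \<in> RT \<Longrightarrow> length r = 8" by (simp add: RT_iff E8_iff)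
lemma E8_len: "r \<in> E8 \<Longrightarrow> length r = 8" by (simp add: E8_iff)

lemma ip_root_bounds: assumes "r \<in> RT" "s \<in> RT" shows "ip r s \<le> 2" "ip r s \<ge> -2"
proof -
  have l: "length r = 8" "length s = 8" using assms by (auto simp: RT_len)
  have "sqn (vsub r s) \<ge> 0" "sqn (vadd r s) \<ge> 0" by (rule sqn_nonneg)+
  then show "ip r s \<le> 2" "ip r s \<ge> -2" using assms l by (auto simp: sqn_vsub sqn_vadd RT_iff)
qed

lemma ip_root_cases: assumes "r \<in> RT" "s \<in> RT"
  shows "ip r s = -2 \<or> ip r s = -1 \<or> ip r s = 0 \<or> ip r s = 1 \<or> ip r s = 2"
proof -
  have "ip r s \<in> \<int>" using assms by (intro E8_ip_int) (auto simp: RT_iff)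
  then obtain n where n: "ip r s = of_int n" using Ints_cases by blast
  have "n \<le> 2" "n \<ge> -2" using ip_root_bounds[OF assms] n by auto
  then have "n = -2 \<or> n = -1 \<or> n = 0 \<or> n = 1 \<or> n = 2" by auto
  then show ?thesis using n by auto
qed

lemma ip_root_2: assumes "r \<in> RT" "s \<in> RT" "ip r s = 2" shows "s = r"
proof -
  have l: "length r = 8" "length s = 8" using assms by (auto simp: RT_len)
  have "sqn (vsub r s) = 0" using assms l by (simp add: sqn_vsub RT_iff)
  then show ?thesis using eq_of_sqn_sub l by metis
qed

lemma ip_root_m2: assumes "r \<in> RT" "s \<in> RT" "ip r s = -2" shows "s = vneg r"
proof -
  have l: "length r = 8" "length s = 8" using assms by (auto simp: RT_len)
  have "sqn (vsub s (vneg r)) = 0" using assms l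
    by (simp add: sqn_vsub sqn_vneg RT_iff ip_lin ip_comm[of s r])
  then show ?thesis using eq_of_sqn_sub l by (metis len_ops(3))
qed

lemma RT_vneg: "r \<in> RT \<Longrightarrow> vneg r \<in> RT"
  by (simp add: RT_iff E8_vneg sqn_vneg E8_len)

lemma RT_vsub: assumes "r \<in> RT" "s \<in> RT" "ip r s = 1" shows "vsub r s \<in> RT"
  using assms by (simp add: RT_iff E8_vsub sqn_vsub E8_len)

lemma RT_vadd: assumes "r \<in> RT" "s \<in> RT" "ip r s = -1" shows "vadd r s \<in> RT"
  using assms by (simp add: RT_iff E8_vadd sqn_vadd E8_len)

lemma ip_self_RT: "r \<in> RT \<Longrightarrow> ip r r = 2" by (simp add: RT_iff sqn_def)

lemma rfl_E8: assumes "a \<in> RT" "v \<in> E8" shows "rfl a v \<in> E8"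
proof -
  have "ip v a \<in> \<int>" using assms by (intro E8_ip_int) (auto simp: RT_iff)
  then show ?thesis unfolding rfl_def using assms by (intro E8_vsub E8_scal) (auto simp: RT_iff)
qed

lemma ip_rfl_a: assumes "length a = 8" "sqn a = 2" "length v = 8" shows "ip (rfl a v) a = - ip v a"
  using assms by (simp add: rfl_def ip_lin sqn_def)

lemma ip_rfl: assumes "length a = 8" "sqn a = 2" "length v = 8" "length w = 8"
  shows "ip (rfl a v) (rfl a w) = ip v w"
  using assms by (simp add: rfl_def ip_lin sqn_def ip_comm[of a v] ip_comm[of a w] ip_comm[of w v] algebra_simps)

lemma rfl_rfl: assumes "length a = 8" "sqn a = 2" "length v = 8" shows "rfl a (rfl a v) = v"
proof -
  have e: "ip (vsub v (scal (ip v a) a)) a = - ip v a" using ip_rfl_a[OF assms] unfolding rfl_def .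
  show ?thesis
    by (rule vec_eqI) (use assms in \<open>auto simp: e rfl_def algebra_simps\<close>)
qed

lemma rfl_fix: assumes "length v = 8" "ip v a = 0" shows "rfl a v = v"
  by (rule vec_eqI) (use assms in \<open>auto simp: rfl_def\<close>)

lemma rfl_swap: assumes "x \<in> RT" "y \<in> RT" "ip x y = 1" shows "rfl (vsub x y) x = y"
proof -
  have l: "length x = 8" "length y = 8" using assms by (auto simp: RT_len)
  have "ip x (vsub x y) = 1" using assms l by (simp add: ip_lin ip_self_RT)
  then show ?thesis
    by (intro vec_eqI) (use l in \<open>auto simp: rfl_def\<close>)
qed

definition isoP :: "(real list \<Rightarrow> real list) \<Rightarrow> bool" where
  "isoP g = ((\<forall>v. length v = 8 \<longrightarrow> length (g v) = 8) \<and> (\<forall>v\<in>E8. g v \<in> E8) \<and>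
      (\<forall>v w. length v = 8 \<longrightarrow> length w = 8 \<longrightarrow> ip (g v) (g w) = ip v w))"

definition Aut :: "(real list \<Rightarrow> real list) \<Rightarrow> bool" where
  "Aut g = (isoP g \<and> (\<exists>h. isoP h \<and> (\<forall>v. length v = 8 \<longrightarrow> h (g v) = v \<and> g (h v) = v)))"

lemma isoP_comp: "isoP g \<Longrightarrow> isoP h \<Longrightarrow> isoP (g \<circ> h)"
  by (simp add: isoP_def)

lemma Aut_id: "Aut id"
  unfolding Aut_def isoP_def by (intro conjI exI[of _ id]) auto

lemma Aut_comp: assumes "Aut g" "Aut h" shows "Aut (g \<circ> h)"
proof -
  obtain g' where g': "isoP g'" "\<forall>v. length v = 8 \<longrightarrow> g' (g v) = v \<and> g (g' v) = v" using assms(1) by (auto simp: Aut_def)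
  obtain h' where h': "isoP h'" "\<forall>v. length v = 8 \<longrightarrow> h' (h v) = v \<and> h (h' v) = v" using assms(2) by (auto simp: Aut_def)
  have ig: "isoP g" and ih: "isoP h" using assms by (auto simp: Aut_def)
  have "isoP (h' \<circ> g')" using g' h' by (simp add: isoP_comp)
  moreover have "\<forall>v. length v = 8 \<longrightarrow> (h' \<circ> g') ((g \<circ> h) v) = v \<and> (g \<circ> h) ((h' \<circ> g') v) = v"
  proof (intro allI impI)
    fix v :: "real list" assume lv: "length v = 8"
    have l1: "length (h v) = 8" using ih lv unfolding isoP_def by blast
    have l2: "length (g' v) = 8" using g'(1) lv unfolding isoP_def by blast
    have "(h' \<circ> g') ((g \<circ> h) v) = v" using g'(2) h'(2) l1 lv by simp
    moreover have "(g \<circ> h) ((h' \<circ> g') v) = v" using g'(2) h'(2) l2 lv by simp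
    ultimately show "(h' \<circ> g') ((g \<circ> h) v) = v \<and> (g \<circ> h) ((h' \<circ> g') v) = v" by simp
  qed
  ultimately show ?thesis using ig ih unfolding Aut_def by (meson isoP_comp)
qed

lemma isoP_rfl: assumes "a \<in> RT" shows "isoP (rfl a)"
proof -
  have "length a = 8" "sqn a = 2" using assms by (auto simp: RT_len RT_iff)
  then show ?thesis unfolding isoP_def using rfl_E8[OF assms] ip_rfl by simp
qed

lemma Aut_iso: "Aut g \<Longrightarrow> isoP g" by (simp add: Aut_def)

lemma isoP_len: "isoP g \<Longrightarrow> length v = 8 \<Longrightarrow> length (g v) = 8"
  unfolding isoP_def by blast
lemma isoP_E8: "isoP g \<Longrightarrow> v \<in> E8 \<Longrightarrow> g v \<in> E8"
  unfolding isoP_def by blast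
lemma isoP_ip: "isoP g \<Longrightarrow> length v = 8 \<Longrightarrow> length w = 8 \<Longrightarrow> ip (g v) (g w) = ip v w"
  unfolding isoP_def by blast

lemma Aut_rfl: assumes "a \<in> RT" shows "Aut (rfl a)"
proof -
  have "length a = 8" "sqn a = 2" using assms by (auto simp: RT_len RT_iff)
  then have "\<forall>v. length v = 8 \<longrightarrow> rfl a (rfl a v) = v \<and> rfl a (rfl a v) = v" using rfl_rfl by simp
  then show ?thesis unfolding Aut_def using isoP_rfl[OF assms] by blast
qed

lemma Aut_len: "Aut g \<Longrightarrow> length v = 8 \<Longrightarrow> length (g v) = 8"
  using Aut_iso isoP_len by blast

lemma Aut_ip: "Aut g \<Longrightarrow> length v = 8 \<Longrightarrow> length w = 8 \<Longrightarrow> ip (g v) (g w) = ip v w"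
  using Aut_iso isoP_ip by blast

lemma Aut_E8: "Aut g \<Longrightarrow> v \<in> E8 \<Longrightarrow> g v \<in> E8"
  using Aut_iso isoP_E8 by blast

lemma Aut_RT: assumes "Aut g" "r \<in> RT" shows "g r \<in> RT"
proof -
  have "g r \<in> E8" using Aut_E8 assms by (auto simp: RT_iff)
  moreover have "ip (g r) (g r) = ip r r" using Aut_ip assms RT_len by blast
  ultimately show ?thesis using assms by (simp add: RT_iff sqn_def)
qed

lemma Aut_inj: assumes "Aut g" shows "inj_on g {v. length v = 8}"
proof (rule inj_onI)
  obtain h where h: "\<forall>v. length v = 8 \<longrightarrow> h (g v) = v" using assms unfolding Aut_def by blast
  fix x y assume "x \<in> {v. length v = 8}" "y \<in> {v. length v = 8}" "g x = g y"
  then have "h (g x) = h (g y)" "length x = 8" "length y = 8" by auto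
  then show "x = y" using h by metis
qed

definition SS :: "nat \<Rightarrow> real list set" where "SS d = {l \<in> E8. sqn l = real (2*d)}"

lemma card_transport:
  assumes g: "Aut g" and X: "\<forall>x\<in>X. length x = 8"
  shows "card {l\<in>SS d. \<forall>x\<in>X. ip x l = 0} = card {l\<in>SS d. \<forall>x\<in>X. ip (g x) l = 0}"
proof -
  obtain h where h: "isoP h" "\<forall>v. length v = 8 \<longrightarrow> h (g v) = v \<and> g (h v) = v" using g unfolding Aut_def by blast
  have gi: "isoP g" using g by (simp add: Aut_def)
  let ?A = "{l\<in>SS d. \<forall>x\<in>X. ip x l = 0}" and ?B = "{l\<in>SS d. \<forall>x\<in>X. ip (g x) l = 0}"
  have eqB: "g ` ?A = ?B"
  proof
    show "g ` ?A \<subseteq> ?B"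
    proof
      fix l' assume "l' \<in> g ` ?A"
      then obtain l where l: "l \<in> ?A" "l' = g l" by blast
      have ll: "length l = 8" using l by (simp add: SS_def E8_len)
      have "g l \<in> E8" using isoP_E8[OF gi] l by (simp add: SS_def)
      moreover have "sqn (g l) = sqn l" unfolding sqn_def using isoP_ip[OF gi ll ll] .
      moreover have "\<forall>x\<in>X. ip (g x) (g l) = 0"
      proof
        fix x assume x: "x \<in> X"
        have "ip (g x) (g l) = ip x l" using isoP_ip[OF gi _ ll] x X by blast
        then show "ip (g x) (g l) = 0" using l x by simp
      qed
      ultimately show "l' \<in> ?B" using l by (simp add: SS_def)
    qed
  next
    show "?B \<subseteq> g ` ?A"
    proof
      fix l assume l: "l \<in> ?B"
      have ll: "length l = 8" using l by (simp add: SS_def E8_len)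
      have lh: "length (h l) = 8" using isoP_len[OF h(1) ll] .
      have "h l \<in> E8" using isoP_E8[OF h(1)] l by (simp add: SS_def)
      moreover have "sqn (h l) = sqn l" unfolding sqn_def using isoP_ip[OF h(1) ll ll] .
      moreover have "\<forall>x\<in>X. ip x (h l) = 0"
      proof
        fix x assume x: "x \<in> X"
        have "ip x (h l) = ip (g x) (g (h l))" using isoP_ip[OF gi _ lh] x X by metis
        also have "\<dots> = ip (g x) l" using h(2) ll by simp
        finally show "ip x (h l) = 0" using l x by simp
      qed
      ultimately have "h l \<in> ?A" using l by (simp add: SS_def)
      moreover have "l = g (h l)" using h(2) ll by simp
      ultimately show "l \<in> g ` ?A" by blast
    qed
  qed
  have inj: "inj_on g ?A"
    by (rule inj_on_subset[OF Aut_inj[OF g]]) (simp add: SS_def E8_len subset_iff)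
  have "card (g ` ?A) = card ?A" by (rule card_image[OF inj])
  then show ?thesis unfolding eqB by simp
qed

lemma sum8: "(\<Sum>i<(8::nat). f i) = f 0 + f 1 + f 2 + f 3 + f 4 + f 5 + f 6 + (f 7 :: 'a::comm_monoid_add)"
  by (simp add: numeral_eq_Suc lessThan_Suc ac_simps)

lemma len8: assumes "length k = 8"
  obtains a0 a1 a2 a3 a4 a5 a6 a7 where "k = [a0,a1,a2,a3,a4,a5,a6,a7]"
proof -
  have "k = [k!0,k!1,k!2,k!3,k!4,k!5,k!6,k!7]"
    using assms by (intro nth_equalityI) (auto simp: less_Suc_eq nth_Cons' eval_nat_numeral)
  then show ?thesis using that by blast
qed

definition hv :: "int list \<Rightarrow> real list" where "hv k = map (\<lambda>x. of_int x / 2) k"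

definition ipi :: "int list \<Rightarrow> int list \<Rightarrow> int" where
  "ipi a b = sum_list (map2 (*) a b)"

definition okI :: "int list \<Rightarrow> bool" where
  "okI k = (length k = 8 \<and> sum_list (map (\<lambda>x. x*x) k) = 8 \<and>
     ((\<forall>x\<in>set k. x mod 2 = 0) \<or> (\<forall>x\<in>set k. x mod 2 = 1)) \<and> sum_list k mod 4 = 0)"

lemma len_hv[simp]: "length (hv k) = length k" by (simp add: hv_def)

lemma ip_hv: assumes "length a = 8" "length b = 8" shows "ip (hv a) (hv b) = of_int (ipi a b) / 4"
proof -
  obtain a0 a1 a2 a3 a4 a5 a6 a7 where a: "a = [a0,a1,a2,a3,a4,a5,a6,a7]" using len8[OF assms(1)] by blast
  obtain b0 b1 b2 b3 b4 b5 b6 b7 where b: "b = [b0,b1,b2,b3,b4,b5,b6,b7]" using len8[OF assms(2)] by blast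
  show ?thesis unfolding a b by (simp add: ip8 sum8 hv_def ipi_def field_simps)
qed

lemma okI_RT: assumes "okI k" shows "hv k \<in> RT"
proof -
  have l: "length k = 8" using assms by (simp add: okI_def)
  obtain a0 a1 a2 a3 a4 a5 a6 a7 where a: "k = [a0,a1,a2,a3,a4,a5,a6,a7]" using len8[OF l] by blast
  have sq: "a0*a0+a1*a1+a2*a2+a3*a3+a4*a4+a5*a5+a6*a6+a7*a7 = 8" using assms unfolding a okI_def by simp
  have sm: "(a0+a1+a2+a3+a4+a5+a6+a7) mod 4 = 0" using assms unfolding a okI_def by (simp add: add.assoc)
  then obtain m where m: "a0+a1+a2+a3+a4+a5+a6+a7 = 4*m" by (metis dvd_def mod_0_imp_dvd)
  have s1: "(\<Sum>i<8. hv k ! i)/2 \<in> \<int>"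
  proof -
    have "(\<Sum>i<8. hv k ! i)/2 = of_int (a0+a1+a2+a3+a4+a5+a6+a7) / 4"
      unfolding a by (simp add: sum8 hv_def field_simps)
    also have "\<dots> = of_int m" using m by simp
    finally show ?thesis by simp
  qed
  have s2: "sqn (hv k) = 2"
  proof -
    have "sqn (hv k) = of_int (a0*a0+a1*a1+a2*a2+a3*a3+a4*a4+a5*a5+a6*a6+a7*a7) / 4"
      unfolding a sqn_def by (simp add: ip8 sum8 hv_def field_simps)
    then show ?thesis using sq by simp
  qed
  have t: "intv (hv k) \<or> halfv (hv k)"
  proof (cases "\<forall>x\<in>set k. x mod 2 = 0")
    case True
    have "intv (hv k)" unfolding intv_def
    proof (intro allI impI)
      fix i :: nat assume "i < 8"
      then have "k!i mod 2 = 0" using True l by auto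
      then obtain q where "k!i = 2*q" by (metis dvd_def mod_0_imp_dvd)
      then show "hv k ! i \<in> \<int>" using \<open>i<8\<close> l by (simp add: hv_def)
    qed
    then show ?thesis by simp
  next
    case False
    then have odd: "\<forall>x\<in>set k. x mod 2 = 1" using assms by (auto simp: okI_def)
    have "halfv (hv k)" unfolding halfv_def
    proof (intro allI impI)
      fix i :: nat assume "i < 8"
      then have "k!i mod 2 = 1" using odd l by auto
      then obtain q where "k!i = 2*q + 1" by (metis mult_div_mod_eq add.commute mult.commute)
      then have "hv k ! i - 1/2 = of_int q" using \<open>i<8\<close> l by (simp add: hv_def field_simps)
      then show "hv k ! i - 1/2 \<in> \<int>" by simp
    qed
    then show ?thesis by simp
  qed
  show ?thesis using s1 s2 t l by (simp add: RT_iff E8_iff)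
qed

fun genE :: "nat \<Rightarrow> int \<Rightarrow> int list list" where
  "genE 0 t = (if t = 0 then [[]] else [])"
| "genE (Suc n) t = concat (map (\<lambda>x. map ((#) x) (genE n (t - x*x))) (filter (\<lambda>x. x*x \<le> t) [-2,0,2]))"

fun genO :: "nat \<Rightarrow> int list list" where
  "genO 0 = [[]]"
| "genO (Suc n) = concat (map (\<lambda>x. map ((#) x) (genO n)) [-1,1])"

definition RIlit :: "int list list" where "RIlit = [[-2,-2,0,0,0,0,0,0], [-2,0,-2,0,0,0,0,0], [-2,0,0,-2,0,0,0,0], [-2,0,0,0,-2,0,0,0], [-2,0,0,0,0,-2,0,0], [-2,0,0,0,0,0,-2,0], [-2,0,0,0,0,0,0,-2], [-2,0,0,0,0,0,0,2], [-2,0,0,0,0,0,2,0], [-2,0,0,0,0,2,0,0], [-2,0,0,0,2,0,0,0], [-2,0,0,2,0,0,0,0], [-2,0,2,0,0,0,0,0], [-2,2,0,0,0,0,0,0], [0,-2,-2,0,0,0,0,0], [0,-2,0,-2,0,0,0,0], [0,-2,0,0,-2,0,0,0], [0,-2,0,0,0,-2,0,0], [0,-2,0,0,0,0,-2,0], [0,-2,0,0,0,0,0,-2], [0,-2,0,0,0,0,0,2], [0,-2,0,0,0,0,2,0], [0,-2,0,0,0,2,0,0], [0,-2,0,0,2,0,0,0], [0,-2,0,2,0,0,0,0], [0,-2,2,0,0,0,0,0], [0,0,-2,-2,0,0,0,0], [0,0,-2,0,-2,0,0,0], [0,0,-2,0,0,-2,0,0], [0,0,-2,0,0,0,-2,0],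 [0,0,-2,0,0,0,0,-2], [0,0,-2,0,0,0,0,2], [0,0,-2,0,0,0,2,0], [0,0,-2,0,0,2,0,0], [0,0,-2,0,2,0,0,0], [0,0,-2,2,0,0,0,0], [0,0,0,-2,-2,0,0,0], [0,0,0,-2,0,-2,0,0], [0,0,0,-2,0,0,-2,0], [0,0,0,-2,0,0,0,-2], [0,0,0,-2,0,0,0,2], [0,0,0,-2,0,0,2,0], [0,0,0,-2,0,2,0,0], [0,0,0,-2,2,0,0,0], [0,0,0,0,-2,-2,0,0], [0,0,0,0,-2,0,-2,0], [0,0,0,0,-2,0,0,-2], [0,0,0,0,-2,0,0,2], [0,0,0,0,-2,0,2,0], [0,0,0,0,-2,2,0,0], [0,0,0,0,0,-2,-2,0], [0,0,0,0,0,-2,0,-2], [0,0,0,0,0,-2,0,2], [0,0,0,0,0,-2,2,0], [0,0,0,0,0,0,-2,-2], [0,0,0,0,0,0,-2,2], [0,0,0,0,0,0,2,-2], [0,0,0,0,0,0,2,2], [0,0,0,0,0,2,-2,0], [0,0,0,0,0,2,0,-2], [0,0,0,0,0,2,0,2], [0,0,0,0,0,2,2,0], [0,0,0,0,2,-2,0,0], [0,0,0,0,2,0,-2,0], [0,0,0,0,2,0,0,-2], [0,0,0,0,2,0,0,2], [0,0,0,0,2,0,2,0], [0,0,0,0,2,2,0,0], [0,0,0,2,-2,0,0,0], [0,0,0,2,0,-2,0,0], [0,0,0,2,0,0,-2,0], [0,0,0,2,0,0,0,-2], [0,0,0,2,0,0,0,2], [0,0,0,2,0,0,2,0], [0,0,0,2,0,2,0,0],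 [0,0,0,2,2,0,0,0], [0,0,2,-2,0,0,0,0], [0,0,2,0,-2,0,0,0], [0,0,2,0,0,-2,0,0], [0,0,2,0,0,0,-2,0], [0,0,2,0,0,0,0,-2], [0,0,2,0,0,0,0,2], [0,0,2,0,0,0,2,0], [0,0,2,0,0,2,0,0], [0,0,2,0,2,0,0,0], [0,0,2,2,0,0,0,0], [0,2,-2,0,0,0,0,0], [0,2,0,-2,0,0,0,0], [0,2,0,0,-2,0,0,0], [0,2,0,0,0,-2,0,0], [0,2,0,0,0,0,-2,0], [0,2,0,0,0,0,0,-2], [0,2,0,0,0,0,0,2], [0,2,0,0,0,0,2,0], [0,2,0,0,0,2,0,0], [0,2,0,0,2,0,0,0], [0,2,0,2,0,0,0,0], [0,2,2,0,0,0,0,0], [2,-2,0,0,0,0,0,0], [2,0,-2,0,0,0,0,0], [2,0,0,-2,0,0,0,0], [2,0,0,0,-2,0,0,0], [2,0,0,0,0,-2,0,0], [2,0,0,0,0,0,-2,0], [2,0,0,0,0,0,0,-2], [2,0,0,0,0,0,0,2], [2,0,0,0,0,0,2,0], [2,0,0,0,0,2,0,0], [2,0,0,0,2,0,0,0], [2,0,0,2,0,0,0,0], [2,0,2,0,0,0,0,0], [2,2,0,0,0,0,0,0], [-1,-1,-1,-1,-1,-1,-1,-1], [-1,-1,-1,-1,-1,-1,1,1], [-1,-1,-1,-1,-1,1,-1,1], [-1,-1,-1,-1,-1,1,1,-1], [-1,-1,-1,-1,1,-1,-1,1], [-1,-1,-1,-1,1,-1,1,-1], [-1,-1,-1,-1,1,1,-1,-1],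 [-1,-1,-1,-1,1,1,1,1], [-1,-1,-1,1,-1,-1,-1,1], [-1,-1,-1,1,-1,-1,1,-1], [-1,-1,-1,1,-1,1,-1,-1], [-1,-1,-1,1,-1,1,1,1], [-1,-1,-1,1,1,-1,-1,-1], [-1,-1,-1,1,1,-1,1,1], [-1,-1,-1,1,1,1,-1,1], [-1,-1,-1,1,1,1,1,-1], [-1,-1,1,-1,-1,-1,-1,1], [-1,-1,1,-1,-1,-1,1,-1], [-1,-1,1,-1,-1,1,-1,-1], [-1,-1,1,-1,-1,1,1,1], [-1,-1,1,-1,1,-1,-1,-1], [-1,-1,1,-1,1,-1,1,1], [-1,-1,1,-1,1,1,-1,1], [-1,-1,1,-1,1,1,1,-1], [-1,-1,1,1,-1,-1,-1,-1], [-1,-1,1,1,-1,-1,1,1], [-1,-1,1,1,-1,1,-1,1], [-1,-1,1,1,-1,1,1,-1], [-1,-1,1,1,1,-1,-1,1], [-1,-1,1,1,1,-1,1,-1], [-1,-1,1,1,1,1,-1,-1], [-1,-1,1,1,1,1,1,1], [-1,1,-1,-1,-1,-1,-1,1], [-1,1,-1,-1,-1,-1,1,-1], [-1,1,-1,-1,-1,1,-1,-1], [-1,1,-1,-1,-1,1,1,1], [-1,1,-1,-1,1,-1,-1,-1], [-1,1,-1,-1,1,-1,1,1], [-1,1,-1,-1,1,1,-1,1], [-1,1,-1,-1,1,1,1,-1], [-1,1,-1,1,-1,-1,-1,-1], [-1,1,-1,1,-1,-1,1,1], [-1,1,-1,1,-1,1,-1,1], [-1,1,-1,1,-1,1,1,-1],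 [-1,1,-1,1,1,-1,-1,1], [-1,1,-1,1,1,-1,1,-1], [-1,1,-1,1,1,1,-1,-1], [-1,1,-1,1,1,1,1,1], [-1,1,1,-1,-1,-1,-1,-1], [-1,1,1,-1,-1,-1,1,1], [-1,1,1,-1,-1,1,-1,1], [-1,1,1,-1,-1,1,1,-1], [-1,1,1,-1,1,-1,-1,1], [-1,1,1,-1,1,-1,1,-1], [-1,1,1,-1,1,1,-1,-1], [-1,1,1,-1,1,1,1,1], [-1,1,1,1,-1,-1,-1,1], [-1,1,1,1,-1,-1,1,-1], [-1,1,1,1,-1,1,-1,-1], [-1,1,1,1,-1,1,1,1], [-1,1,1,1,1,-1,-1,-1], [-1,1,1,1,1,-1,1,1], [-1,1,1,1,1,1,-1,1], [-1,1,1,1,1,1,1,-1], [1,-1,-1,-1,-1,-1,-1,1], [1,-1,-1,-1,-1,-1,1,-1], [1,-1,-1,-1,-1,1,-1,-1], [1,-1,-1,-1,-1,1,1,1], [1,-1,-1,-1,1,-1,-1,-1], [1,-1,-1,-1,1,-1,1,1], [1,-1,-1,-1,1,1,-1,1], [1,-1,-1,-1,1,1,1,-1], [1,-1,-1,1,-1,-1,-1,-1], [1,-1,-1,1,-1,-1,1,1], [1,-1,-1,1,-1,1,-1,1], [1,-1,-1,1,-1,1,1,-1], [1,-1,-1,1,1,-1,-1,1], [1,-1,-1,1,1,-1,1,-1], [1,-1,-1,1,1,1,-1,-1], [1,-1,-1,1,1,1,1,1], [1,-1,1,-1,-1,-1,-1,-1], [1,-1,1,-1,-1,-1,1,1], [1,-1,1,-1,-1,1,-1,1],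 [1,-1,1,-1,-1,1,1,-1], [1,-1,1,-1,1,-1,-1,1], [1,-1,1,-1,1,-1,1,-1], [1,-1,1,-1,1,1,-1,-1], [1,-1,1,-1,1,1,1,1], [1,-1,1,1,-1,-1,-1,1], [1,-1,1,1,-1,-1,1,-1], [1,-1,1,1,-1,1,-1,-1], [1,-1,1,1,-1,1,1,1], [1,-1,1,1,1,-1,-1,-1], [1,-1,1,1,1,-1,1,1], [1,-1,1,1,1,1,-1,1], [1,-1,1,1,1,1,1,-1], [1,1,-1,-1,-1,-1,-1,-1], [1,1,-1,-1,-1,-1,1,1], [1,1,-1,-1,-1,1,-1,1], [1,1,-1,-1,-1,1,1,-1], [1,1,-1,-1,1,-1,-1,1], [1,1,-1,-1,1,-1,1,-1], [1,1,-1,-1,1,1,-1,-1], [1,1,-1,-1,1,1,1,1], [1,1,-1,1,-1,-1,-1,1], [1,1,-1,1,-1,-1,1,-1], [1,1,-1,1,-1,1,-1,-1], [1,1,-1,1,-1,1,1,1], [1,1,-1,1,1,-1,-1,-1], [1,1,-1,1,1,-1,1,1], [1,1,-1,1,1,1,-1,1], [1,1,-1,1,1,1,1,-1], [1,1,1,-1,-1,-1,-1,1], [1,1,1,-1,-1,-1,1,-1], [1,1,1,-1,-1,1,-1,-1], [1,1,1,-1,-1,1,1,1], [1,1,1,-1,1,-1,-1,-1], [1,1,1,-1,1,-1,1,1], [1,1,1,-1,1,1,-1,1], [1,1,1,-1,1,1,1,-1], [1,1,1,1,-1,-1,-1,-1], [1,1,1,1,-1,-1,1,1], [1,1,1,1,-1,1,-1,1],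 [1,1,1,1,-1,1,1,-1], [1,1,1,1,1,-1,-1,1], [1,1,1,1,1,-1,1,-1], [1,1,1,1,1,1,-1,-1], [1,1,1,1,1,1,1,1]]"

definition PT1 :: "int list list list" where "PT1 = [[[0,-2,-2,0,0,0,0,0], [2,-2,0,0,0,0,0,0]], [[0,-2,-2,0,0,0,0,0], [2,-2,0,0,0,0,0,0]], [[0,-2,0,-2,0,0,0,0], [2,-2,0,0,0,0,0,0]], [[0,-2,0,0,-2,0,0,0], [2,-2,0,0,0,0,0,0]], [[0,-2,0,0,0,-2,0,0], [2,-2,0,0,0,0,0,0]], [[0,-2,0,0,0,0,-2,0], [2,-2,0,0,0,0,0,0]], [[0,-2,0,0,0,0,0,-2], [2,-2,0,0,0,0,0,0]], [[0,-2,0,0,0,0,0,2], [2,-2,0,0,0,0,0,0]], [[0,-2,0,0,0,0,2,0], [2,-2,0,0,0,0,0,0]], [[0,-2,0,0,0,2,0,0], [2,-2,0,0,0,0,0,0]], [[0,-2,0,0,2,0,0,0], [2,-2,0,0,0,0,0,0]], [[0,-2,0,2,0,0,0,0], [2,-2,0,0,0,0,0,0]], [[0,-2,2,0,0,0,0,0], [2,-2,0,0,0,0,0,0]], [[-2,0,-2,0,0,0,0,0], [0,-2,-2,0,0,0,0,0], [2,-2,0,0,0,0,0,0]], [[2,-2,0,0,0,0,0,0]], [[2,-2,0,0,0,0,0,0]], [[2,-2,0,0,0,0,0,0]], [[2,-2,0,0,0,0,0,0]], [[2,-2,0,0,0,0,0,0]], [[2,-2,0,0,0,0,0,0]], [[2,-2,0,0,0,0,0,0]],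 [[2,-2,0,0,0,0,0,0]], [[2,-2,0,0,0,0,0,0]], [[2,-2,0,0,0,0,0,0]], [[2,-2,0,0,0,0,0,0]], [[2,-2,0,0,0,0,0,0]], [[0,-2,-2,0,0,0,0,0], [2,-2,0,0,0,0,0,0]], [[0,-2,-2,0,0,0,0,0], [2,-2,0,0,0,0,0,0]], [[0,-2,-2,0,0,0,0,0], [2,-2,0,0,0,0,0,0]], [[0,-2,-2,0,0,0,0,0], [2,-2,0,0,0,0,0,0]], [[0,-2,-2,0,0,0,0,0], [2,-2,0,0,0,0,0,0]], [[0,-2,-2,0,0,0,0,0], [2,-2,0,0,0,0,0,0]], [[0,-2,-2,0,0,0,0,0], [2,-2,0,0,0,0,0,0]], [[0,-2,-2,0,0,0,0,0], [2,-2,0,0,0,0,0,0]], [[0,-2,-2,0,0,0,0,0], [2,-2,0,0,0,0,0,0]], [[0,-2,-2,0,0,0,0,0], [2,-2,0,0,0,0,0,0]], [[0,-2,0,-2,0,0,0,0], [2,-2,0,0,0,0,0,0]], [[0,-2,0,-2,0,0,0,0], [2,-2,0,0,0,0,0,0]], [[0,-2,0,-2,0,0,0,0], [2,-2,0,0,0,0,0,0]], [[0,-2,0,-2,0,0,0,0], [2,-2,0,0,0,0,0,0]], [[0,-2,0,-2,0,0,0,0], [2,-2,0,0,0,0,0,0]], [[0,-2,0,-2,0,0,0,0], [2,-2,0,0,0,0,0,0]], [[0,-2,0,-2,0,0,0,0], [2,-2,0,0,0,0,0,0]], [[0,-2,0,-2,0,0,0,0], [2,-2,0,0,0,0,0,0]],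 [[0,-2,0,0,-2,0,0,0], [2,-2,0,0,0,0,0,0]], [[0,-2,0,0,-2,0,0,0], [2,-2,0,0,0,0,0,0]], [[0,-2,0,0,-2,0,0,0], [2,-2,0,0,0,0,0,0]], [[0,-2,0,0,-2,0,0,0], [2,-2,0,0,0,0,0,0]], [[0,-2,0,0,-2,0,0,0], [2,-2,0,0,0,0,0,0]], [[0,-2,0,0,-2,0,0,0], [2,-2,0,0,0,0,0,0]], [[0,-2,0,0,0,-2,0,0], [2,-2,0,0,0,0,0,0]], [[0,-2,0,0,0,-2,0,0], [2,-2,0,0,0,0,0,0]], [[0,-2,0,0,0,-2,0,0], [2,-2,0,0,0,0,0,0]], [[0,-2,0,0,0,-2,0,0], [2,-2,0,0,0,0,0,0]], [[0,-2,0,0,0,0,-2,0], [2,-2,0,0,0,0,0,0]], [[0,-2,0,0,0,0,-2,0], [2,-2,0,0,0,0,0,0]], [[0,-2,0,0,0,0,0,-2], [2,-2,0,0,0,0,0,0]], [[0,-2,0,0,0,0,0,2], [2,-2,0,0,0,0,0,0]], [[0,-2,0,0,0,0,-2,0], [2,-2,0,0,0,0,0,0]], [[0,-2,0,0,0,0,0,-2], [2,-2,0,0,0,0,0,0]], [[0,-2,0,0,0,0,0,2], [2,-2,0,0,0,0,0,0]], [[0,-2,0,0,0,0,2,0], [2,-2,0,0,0,0,0,0]], [[0,-2,0,0,0,-2,0,0], [2,-2,0,0,0,0,0,0]], [[0,-2,0,0,0,0,-2,0], [2,-2,0,0,0,0,0,0]], [[0,-2,0,0,0,0,0,-2], [2,-2,0,0,0,0,0,0]],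 [[0,-2,0,0,0,0,0,2], [2,-2,0,0,0,0,0,0]], [[0,-2,0,0,0,0,2,0], [2,-2,0,0,0,0,0,0]], [[0,-2,0,0,0,2,0,0], [2,-2,0,0,0,0,0,0]], [[0,-2,0,0,-2,0,0,0], [2,-2,0,0,0,0,0,0]], [[0,-2,0,0,0,-2,0,0], [2,-2,0,0,0,0,0,0]], [[0,-2,0,0,0,0,-2,0], [2,-2,0,0,0,0,0,0]], [[0,-2,0,0,0,0,0,-2], [2,-2,0,0,0,0,0,0]], [[0,-2,0,0,0,0,0,2], [2,-2,0,0,0,0,0,0]], [[0,-2,0,0,0,0,2,0], [2,-2,0,0,0,0,0,0]], [[0,-2,0,0,0,2,0,0], [2,-2,0,0,0,0,0,0]], [[0,-2,0,0,2,0,0,0], [2,-2,0,0,0,0,0,0]], [[0,-2,0,-2,0,0,0,0], [2,-2,0,0,0,0,0,0]], [[0,-2,0,0,-2,0,0,0], [2,-2,0,0,0,0,0,0]], [[0,-2,0,0,0,-2,0,0], [2,-2,0,0,0,0,0,0]], [[0,-2,0,0,0,0,-2,0], [2,-2,0,0,0,0,0,0]], [[0,-2,0,0,0,0,0,-2], [2,-2,0,0,0,0,0,0]], [[0,-2,0,0,0,0,0,2], [2,-2,0,0,0,0,0,0]], [[0,-2,0,0,0,0,2,0], [2,-2,0,0,0,0,0,0]], [[0,-2,0,0,0,2,0,0], [2,-2,0,0,0,0,0,0]], [[0,-2,0,0,2,0,0,0], [2,-2,0,0,0,0,0,0]], [[0,-2,0,2,0,0,0,0], [2,-2,0,0,0,0,0,0]],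 [[2,0,-2,0,0,0,0,0], [2,-2,0,0,0,0,0,0]], [[2,0,0,-2,0,0,0,0], [2,-2,0,0,0,0,0,0]], [[2,0,0,0,-2,0,0,0], [2,-2,0,0,0,0,0,0]], [[2,0,0,0,0,-2,0,0], [2,-2,0,0,0,0,0,0]], [[2,0,0,0,0,0,-2,0], [2,-2,0,0,0,0,0,0]], [[2,0,0,0,0,0,0,-2], [2,-2,0,0,0,0,0,0]], [[2,0,0,0,0,0,0,2], [2,-2,0,0,0,0,0,0]], [[2,0,0,0,0,0,2,0], [2,-2,0,0,0,0,0,0]], [[2,0,0,0,0,2,0,0], [2,-2,0,0,0,0,0,0]], [[2,0,0,0,2,0,0,0], [2,-2,0,0,0,0,0,0]], [[2,0,0,2,0,0,0,0], [2,-2,0,0,0,0,0,0]], [[2,0,2,0,0,0,0,0], [2,-2,0,0,0,0,0,0]], [], [[2,-2,0,0,0,0,0,0]], [[2,-2,0,0,0,0,0,0]], [[2,-2,0,0,0,0,0,0]], [[2,-2,0,0,0,0,0,0]], [[2,-2,0,0,0,0,0,0]], [[2,-2,0,0,0,0,0,0]], [[2,-2,0,0,0,0,0,0]], [[2,-2,0,0,0,0,0,0]], [[2,-2,0,0,0,0,0,0]], [[2,-2,0,0,0,0,0,0]], [[2,-2,0,0,0,0,0,0]], [[2,-2,0,0,0,0,0,0]], [[2,0,-2,0,0,0,0,0], [2,-2,0,0,0,0,0,0]], [[0,-2,-2,0,0,0,0,0], [2,-2,0,0,0,0,0,0]], [[0,-2,-2,0,0,0,0,0], [2,-2,0,0,0,0,0,0]],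 [[0,-2,-2,0,0,0,0,0], [2,-2,0,0,0,0,0,0]], [[0,-2,-2,0,0,0,0,0], [2,-2,0,0,0,0,0,0]], [[0,-2,-2,0,0,0,0,0], [2,-2,0,0,0,0,0,0]], [[0,-2,-2,0,0,0,0,0], [2,-2,0,0,0,0,0,0]], [[0,-2,-2,0,0,0,0,0], [2,-2,0,0,0,0,0,0]], [[0,-2,-2,0,0,0,0,0], [2,-2,0,0,0,0,0,0]], [[0,-2,-2,0,0,0,0,0], [2,-2,0,0,0,0,0,0]], [[0,-2,-2,0,0,0,0,0], [2,-2,0,0,0,0,0,0]], [[0,-2,-2,0,0,0,0,0], [2,-2,0,0,0,0,0,0]], [[0,-2,-2,0,0,0,0,0], [2,-2,0,0,0,0,0,0]], [[0,-2,-2,0,0,0,0,0], [2,-2,0,0,0,0,0,0]], [[0,-2,-2,0,0,0,0,0], [2,-2,0,0,0,0,0,0]], [[0,-2,-2,0,0,0,0,0], [2,-2,0,0,0,0,0,0]], [[0,-2,-2,0,0,0,0,0], [2,-2,0,0,0,0,0,0]], [[0,-2,0,-2,0,0,0,0], [2,-2,0,0,0,0,0,0]], [[0,-2,0,-2,0,0,0,0], [2,-2,0,0,0,0,0,0]], [[0,-2,0,-2,0,0,0,0], [2,-2,0,0,0,0,0,0]], [[0,-2,0,-2,0,0,0,0], [2,-2,0,0,0,0,0,0]], [[0,-2,0,-2,0,0,0,0], [2,-2,0,0,0,0,0,0]], [[0,-2,0,-2,0,0,0,0], [2,-2,0,0,0,0,0,0]], [[0,-2,0,-2,0,0,0,0],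 [2,-2,0,0,0,0,0,0]], [[0,-2,0,-2,0,0,0,0], [2,-2,0,0,0,0,0,0]], [[0,-2,0,0,-2,0,0,0], [2,-2,0,0,0,0,0,0]], [[0,-2,0,0,-2,0,0,0], [2,-2,0,0,0,0,0,0]], [[0,-2,0,0,-2,0,0,0], [2,-2,0,0,0,0,0,0]], [[0,-2,0,0,-2,0,0,0], [2,-2,0,0,0,0,0,0]], [[0,-2,0,0,0,-2,0,0], [2,-2,0,0,0,0,0,0]], [[0,-2,0,0,0,-2,0,0], [2,-2,0,0,0,0,0,0]], [[0,-2,0,0,0,0,-2,0], [2,-2,0,0,0,0,0,0]], [[0,-2,0,0,0,0,0,2], [2,-2,0,0,0,0,0,0]], [[1,-1,-1,-1,-1,-1,-1,1], [2,-2,0,0,0,0,0,0]], [[1,-1,-1,-1,-1,-1,1,-1], [2,-2,0,0,0,0,0,0]], [[1,-1,-1,-1,-1,1,-1,-1], [2,-2,0,0,0,0,0,0]], [[1,-1,-1,-1,-1,1,1,1], [2,-2,0,0,0,0,0,0]], [[1,-1,-1,-1,1,-1,-1,-1], [2,-2,0,0,0,0,0,0]], [[1,-1,-1,-1,1,-1,1,1], [2,-2,0,0,0,0,0,0]], [[1,-1,-1,-1,1,1,-1,1], [2,-2,0,0,0,0,0,0]], [[1,-1,-1,-1,1,1,1,-1], [2,-2,0,0,0,0,0,0]], [[1,-1,-1,1,-1,-1,-1,-1], [2,-2,0,0,0,0,0,0]], [[1,-1,-1,1,-1,-1,1,1], [2,-2,0,0,0,0,0,0]], [[1,-1,-1,1,-1,1,-1,1],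 [2,-2,0,0,0,0,0,0]], [[1,-1,-1,1,-1,1,1,-1], [2,-2,0,0,0,0,0,0]], [[1,-1,-1,1,1,-1,-1,1], [2,-2,0,0,0,0,0,0]], [[1,-1,-1,1,1,-1,1,-1], [2,-2,0,0,0,0,0,0]], [[1,-1,-1,1,1,1,-1,-1], [2,-2,0,0,0,0,0,0]], [[1,-1,-1,1,1,1,1,1], [2,-2,0,0,0,0,0,0]], [[1,-1,1,-1,-1,-1,-1,-1], [2,-2,0,0,0,0,0,0]], [[1,-1,1,-1,-1,-1,1,1], [2,-2,0,0,0,0,0,0]], [[1,-1,1,-1,-1,1,-1,1], [2,-2,0,0,0,0,0,0]], [[1,-1,1,-1,-1,1,1,-1], [2,-2,0,0,0,0,0,0]], [[1,-1,1,-1,1,-1,-1,1], [2,-2,0,0,0,0,0,0]], [[1,-1,1,-1,1,-1,1,-1], [2,-2,0,0,0,0,0,0]], [[1,-1,1,-1,1,1,-1,-1], [2,-2,0,0,0,0,0,0]], [[1,-1,1,-1,1,1,1,1], [2,-2,0,0,0,0,0,0]], [[1,-1,1,1,-1,-1,-1,1], [2,-2,0,0,0,0,0,0]], [[1,-1,1,1,-1,-1,1,-1], [2,-2,0,0,0,0,0,0]], [[1,-1,1,1,-1,1,-1,-1], [2,-2,0,0,0,0,0,0]], [[1,-1,1,1,-1,1,1,1], [2,-2,0,0,0,0,0,0]], [[1,-1,1,1,1,-1,-1,-1], [2,-2,0,0,0,0,0,0]], [[1,-1,1,1,1,-1,1,1], [2,-2,0,0,0,0,0,0]], [[1,-1,1,1,1,1,-1,1],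 [2,-2,0,0,0,0,0,0]], [[1,-1,1,1,1,1,1,-1], [2,-2,0,0,0,0,0,0]], [[2,-2,0,0,0,0,0,0]], [[2,-2,0,0,0,0,0,0]], [[2,-2,0,0,0,0,0,0]], [[2,-2,0,0,0,0,0,0]], [[2,-2,0,0,0,0,0,0]], [[2,-2,0,0,0,0,0,0]], [[2,-2,0,0,0,0,0,0]], [[2,-2,0,0,0,0,0,0]], [[2,-2,0,0,0,0,0,0]], [[2,-2,0,0,0,0,0,0]], [[2,-2,0,0,0,0,0,0]], [[2,-2,0,0,0,0,0,0]], [[2,-2,0,0,0,0,0,0]], [[2,-2,0,0,0,0,0,0]], [[2,-2,0,0,0,0,0,0]], [[2,-2,0,0,0,0,0,0]], [[2,-2,0,0,0,0,0,0]], [[2,-2,0,0,0,0,0,0]], [[2,-2,0,0,0,0,0,0]], [[2,-2,0,0,0,0,0,0]], [[2,-2,0,0,0,0,0,0]], [[2,-2,0,0,0,0,0,0]], [[2,-2,0,0,0,0,0,0]], [[2,-2,0,0,0,0,0,0]], [[2,-2,0,0,0,0,0,0]], [[2,-2,0,0,0,0,0,0]], [[2,-2,0,0,0,0,0,0]], [[2,-2,0,0,0,0,0,0]], [[2,-2,0,0,0,0,0,0]], [[2,-2,0,0,0,0,0,0]], [[2,-2,0,0,0,0,0,0]], [[2,-2,0,0,0,0,0,0]], [[2,0,-2,0,0,0,0,0], [2,-2,0,0,0,0,0,0]], [[2,0,-2,0,0,0,0,0], [2,-2,0,0,0,0,0,0]], [[2,0,-2,0,0,0,0,0], [2,-2,0,0,0,0,0,0]],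 [[2,0,-2,0,0,0,0,0], [2,-2,0,0,0,0,0,0]], [[2,0,-2,0,0,0,0,0], [2,-2,0,0,0,0,0,0]], [[2,0,-2,0,0,0,0,0], [2,-2,0,0,0,0,0,0]], [[2,0,-2,0,0,0,0,0], [2,-2,0,0,0,0,0,0]], [[2,0,-2,0,0,0,0,0], [2,-2,0,0,0,0,0,0]], [[2,0,-2,0,0,0,0,0], [2,-2,0,0,0,0,0,0]], [[2,0,-2,0,0,0,0,0], [2,-2,0,0,0,0,0,0]], [[2,0,-2,0,0,0,0,0], [2,-2,0,0,0,0,0,0]], [[2,0,-2,0,0,0,0,0], [2,-2,0,0,0,0,0,0]], [[2,0,-2,0,0,0,0,0], [2,-2,0,0,0,0,0,0]], [[2,0,-2,0,0,0,0,0], [2,-2,0,0,0,0,0,0]], [[2,0,-2,0,0,0,0,0], [2,-2,0,0,0,0,0,0]], [[2,0,-2,0,0,0,0,0], [2,-2,0,0,0,0,0,0]], [[2,0,0,-2,0,0,0,0], [2,-2,0,0,0,0,0,0]], [[2,0,0,-2,0,0,0,0], [2,-2,0,0,0,0,0,0]], [[2,0,0,-2,0,0,0,0], [2,-2,0,0,0,0,0,0]], [[2,0,0,-2,0,0,0,0], [2,-2,0,0,0,0,0,0]], [[2,0,0,-2,0,0,0,0], [2,-2,0,0,0,0,0,0]], [[2,0,0,-2,0,0,0,0], [2,-2,0,0,0,0,0,0]], [[2,0,0,-2,0,0,0,0], [2,-2,0,0,0,0,0,0]], [[2,0,0,-2,0,0,0,0], [2,-2,0,0,0,0,0,0]], [[2,0,0,0,-2,0,0,0],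 [2,-2,0,0,0,0,0,0]], [[2,0,0,0,-2,0,0,0], [2,-2,0,0,0,0,0,0]], [[2,0,0,0,-2,0,0,0], [2,-2,0,0,0,0,0,0]], [[2,0,0,0,-2,0,0,0], [2,-2,0,0,0,0,0,0]], [[2,0,0,0,0,-2,0,0], [2,-2,0,0,0,0,0,0]], [[2,0,0,0,0,-2,0,0], [2,-2,0,0,0,0,0,0]], [[2,0,0,0,0,0,-2,0], [2,-2,0,0,0,0,0,0]], [[2,0,0,0,0,0,0,2], [2,-2,0,0,0,0,0,0]]]"

definition PT2 :: "int list list list" where "PT2 = [[[0,2,-2,0,0,0,0,0]], [[-2,0,-2,0,0,0,0,0], [0,2,-2,0,0,0,0,0]], [[-2,0,-2,0,0,0,0,0], [0,2,-2,0,0,0,0,0]], [[-2,0,-2,0,0,0,0,0], [0,2,-2,0,0,0,0,0]], [[-2,0,-2,0,0,0,0,0], [0,2,-2,0,0,0,0,0]], [[-2,0,-2,0,0,0,0,0], [0,2,-2,0,0,0,0,0]], [[-2,0,-2,0,0,0,0,0], [0,2,-2,0,0,0,0,0]], [[-2,0,-2,0,0,0,0,0], [0,2,-2,0,0,0,0,0]], [[-2,0,-2,0,0,0,0,0], [0,2,-2,0,0,0,0,0]], [[-2,0,-2,0,0,0,0,0], [0,2,-2,0,0,0,0,0]], [[-2,0,-2,0,0,0,0,0], [0,2,-2,0,0,0,0,0]], [[-2,0,0,-2,0,0,0,0], [-2,0,-2,0,0,0,0,0], [0,2,-2,0,0,0,0,0]], [], [[0,2,-2,0,0,0,0,0]],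 [[0,2,-2,0,0,0,0,0]], [[0,2,-2,0,0,0,0,0]], [[0,2,-2,0,0,0,0,0]], [[0,2,-2,0,0,0,0,0]], [[0,2,-2,0,0,0,0,0]], [[0,2,-2,0,0,0,0,0]], [[0,2,-2,0,0,0,0,0]], [[0,2,-2,0,0,0,0,0]], [[0,2,-2,0,0,0,0,0]], [[0,2,0,-2,0,0,0,0], [0,2,-2,0,0,0,0,0]], [[0,2,-2,0,0,0,0,0]], [[0,2,-2,0,0,0,0,0]], [[0,2,-2,0,0,0,0,0]], [[0,2,-2,0,0,0,0,0]], [[0,2,-2,0,0,0,0,0]], [[0,2,-2,0,0,0,0,0]], [[0,2,-2,0,0,0,0,0]], [[0,2,-2,0,0,0,0,0]], [[0,2,-2,0,0,0,0,0]], [[0,2,-2,0,0,0,0,0]], [[0,2,-2,0,0,0,0,0]], [[0,2,-2,0,0,0,0,0]], [[0,2,-2,0,0,0,0,0]], [[0,2,-2,0,0,0,0,0]], [[0,2,-2,0,0,0,0,0]], [[0,2,-2,0,0,0,0,0]], [[0,2,0,-2,0,0,0,0], [0,2,-2,0,0,0,0,0]], [[0,2,0,-2,0,0,0,0], [0,2,-2,0,0,0,0,0]], [[0,2,0,-2,0,0,0,0], [0,2,-2,0,0,0,0,0]], [[0,2,0,-2,0,0,0,0], [0,2,-2,0,0,0,0,0]], [[0,2,0,-2,0,0,0,0], [0,2,-2,0,0,0,0,0]], [[0,2,0,-2,0,0,0,0], [0,2,-2,0,0,0,0,0]], [[0,2,0,-2,0,0,0,0], [0,2,-2,0,0,0,0,0]],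 [[0,2,0,-2,0,0,0,0], [0,2,-2,0,0,0,0,0]], [[0,2,0,0,-2,0,0,0], [0,2,-2,0,0,0,0,0]], [[0,2,0,0,-2,0,0,0], [0,2,-2,0,0,0,0,0]], [[0,2,0,0,-2,0,0,0], [0,2,-2,0,0,0,0,0]], [[0,2,0,0,-2,0,0,0], [0,2,-2,0,0,0,0,0]], [[0,2,0,0,0,-2,0,0], [0,2,-2,0,0,0,0,0]], [[0,2,0,0,0,-2,0,0], [0,2,-2,0,0,0,0,0]], [[0,2,0,0,0,0,-2,0], [0,2,-2,0,0,0,0,0]], [[0,2,0,0,0,0,0,-2], [0,2,-2,0,0,0,0,0]]]"

definition PT3 :: "int list list list" where "PT3 = [[[-1,-1,-1,-1,-1,-1,-1,-1], [1,1,-1,-1,-1,-1,-1,-1], [2,2,0,0,0,0,0,0]], [[1,1,-1,-1,-1,-1,-1,-1], [2,2,0,0,0,0,0,0]], [[1,1,-1,-1,-1,-1,-1,-1], [2,2,0,0,0,0,0,0]], [[1,1,-1,-1,-1,-1,-1,-1], [2,2,0,0,0,0,0,0]], [[1,1,-1,-1,-1,-1,-1,-1], [2,2,0,0,0,0,0,0]], [[1,1,-1,-1,-1,-1,-1,-1], [2,2,0,0,0,0,0,0]], [[1,1,-1,-1,-1,-1,1,1], [2,2,0,0,0,0,0,0]], [[1,1,-1,-1,-1,-1,1,1], [2,2,0,0,0,0,0,0]], [[1,1,-1,-1,-1,1,-1,1], [2,2,0,0,0,0,0,0]], [[1,1,-1,-1,1,-1,-1,1], [2,2,0,0,0,0,0,0]],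 [[1,1,-1,1,-1,-1,-1,1], [2,2,0,0,0,0,0,0]], [[1,1,-1,-1,-1,-1,-1,-1], [2,2,0,0,0,0,0,0]], [[1,1,-1,-1,-1,-1,-1,-1], [2,2,0,0,0,0,0,0]], [[1,1,-1,-1,-1,-1,-1,-1], [2,2,0,0,0,0,0,0]], [[1,1,-1,-1,-1,-1,-1,-1], [2,2,0,0,0,0,0,0]], [[1,1,-1,-1,-1,-1,1,1], [2,2,0,0,0,0,0,0]], [[1,1,-1,-1,-1,-1,1,1], [2,2,0,0,0,0,0,0]], [[1,1,-1,-1,-1,1,-1,1], [2,2,0,0,0,0,0,0]], [[1,1,-1,-1,1,-1,-1,1], [2,2,0,0,0,0,0,0]], [[1,1,-1,-1,-1,-1,-1,-1], [2,2,0,0,0,0,0,0]], [[1,1,-1,-1,-1,-1,-1,-1], [2,2,0,0,0,0,0,0]], [[1,1,-1,-1,-1,-1,-1,-1], [2,2,0,0,0,0,0,0]], [[1,1,-1,-1,-1,-1,1,1], [2,2,0,0,0,0,0,0]], [[1,1,-1,-1,-1,-1,1,1], [2,2,0,0,0,0,0,0]], [[1,1,-1,-1,-1,1,-1,1], [2,2,0,0,0,0,0,0]], [[1,1,-1,-1,-1,-1,-1,-1], [2,2,0,0,0,0,0,0]], [[1,1,-1,-1,-1,-1,-1,-1], [2,2,0,0,0,0,0,0]], [[1,1,-1,-1,-1,-1,1,1], [2,2,0,0,0,0,0,0]], [[1,1,-1,-1,-1,-1,1,1], [2,2,0,0,0,0,0,0]], [[1,1,-1,-1,-1,-1,-1,-1],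 [2,2,0,0,0,0,0,0]], [[1,1,-1,-1,-1,1,-1,1], [2,2,0,0,0,0,0,0]], [[1,1,-1,-1,-1,1,1,-1], [2,2,0,0,0,0,0,0]], [[1,1,-1,-1,-1,-1,1,1], [2,2,0,0,0,0,0,0]], [[1,1,-1,-1,-1,1,-1,1], [2,2,0,0,0,0,0,0]], [[1,1,-1,-1,-1,1,1,-1], [2,2,0,0,0,0,0,0]], [[1,1,-1,-1,-1,1,-1,1], [2,2,0,0,0,0,0,0]], [[1,1,-1,-1,-1,1,1,-1], [2,2,0,0,0,0,0,0]], [[1,1,-1,-1,1,-1,-1,1], [2,2,0,0,0,0,0,0]], [[1,1,-1,-1,1,-1,-1,1], [2,2,0,0,0,0,0,0]], [[1,1,-1,-1,1,-1,1,-1], [2,2,0,0,0,0,0,0]], [[1,1,-1,-1,1,-1,-1,1], [2,2,0,0,0,0,0,0]], [[1,1,-1,-1,1,-1,1,-1], [2,2,0,0,0,0,0,0]], [[1,1,-1,-1,1,1,-1,-1], [2,2,0,0,0,0,0,0]], [[1,1,-1,1,-1,-1,-1,1], [2,2,0,0,0,0,0,0]], [[1,1,-1,1,-1,-1,-1,1], [2,2,0,0,0,0,0,0]], [[1,1,-1,1,-1,-1,-1,1], [2,2,0,0,0,0,0,0]], [[1,1,-1,1,-1,-1,1,-1], [2,2,0,0,0,0,0,0]], [[1,1,-1,1,-1,-1,-1,1], [2,2,0,0,0,0,0,0]], [[1,1,-1,1,-1,-1,1,-1], [2,2,0,0,0,0,0,0]], [[1,1,-1,1,-1,1,-1,-1],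 [2,2,0,0,0,0,0,0]], [[1,1,-1,1,1,-1,-1,-1], [2,2,0,0,0,0,0,0]], [[1,1,1,-1,-1,-1,-1,1], [2,2,0,0,0,0,0,0]], [[1,1,1,-1,-1,-1,-1,1], [2,2,0,0,0,0,0,0]], [[1,1,1,-1,-1,-1,-1,1], [2,2,0,0,0,0,0,0]], [[1,1,1,-1,-1,-1,-1,1], [2,2,0,0,0,0,0,0]], [[1,1,1,-1,-1,-1,1,-1], [2,2,0,0,0,0,0,0]], [[1,1,1,-1,-1,-1,-1,1], [2,2,0,0,0,0,0,0]], [[1,1,1,-1,-1,-1,1,-1], [2,2,0,0,0,0,0,0]], [[1,1,1,-1,-1,1,-1,-1], [2,2,0,0,0,0,0,0]], [[1,1,1,-1,1,-1,-1,-1], [2,2,0,0,0,0,0,0]], [[1,1,1,1,-1,-1,-1,-1], [2,2,0,0,0,0,0,0]], [], [[1,1,-1,-1,-1,-1,-1,-1], [2,2,0,0,0,0,0,0]], [[1,1,-1,-1,-1,-1,1,1], [2,2,0,0,0,0,0,0]], [[1,1,-1,-1,-1,1,-1,1], [2,2,0,0,0,0,0,0]], [[1,1,-1,-1,-1,1,1,-1], [2,2,0,0,0,0,0,0]], [[1,1,-1,-1,1,-1,-1,1], [2,2,0,0,0,0,0,0]], [[1,1,-1,-1,1,-1,1,-1], [2,2,0,0,0,0,0,0]], [[1,1,-1,-1,1,1,-1,-1], [2,2,0,0,0,0,0,0]], [[1,1,-1,-1,1,1,1,1], [2,2,0,0,0,0,0,0]], [[1,1,-1,1,-1,-1,-1,1],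 [2,2,0,0,0,0,0,0]], [[1,1,-1,1,-1,-1,1,-1], [2,2,0,0,0,0,0,0]], [[1,1,-1,1,-1,1,-1,-1], [2,2,0,0,0,0,0,0]], [[1,1,-1,1,-1,1,1,1], [2,2,0,0,0,0,0,0]], [[1,1,-1,1,1,-1,-1,-1], [2,2,0,0,0,0,0,0]], [[1,1,-1,1,1,-1,1,1], [2,2,0,0,0,0,0,0]], [[1,1,-1,1,1,1,-1,1], [2,2,0,0,0,0,0,0]], [[1,1,-1,1,1,1,1,-1], [2,2,0,0,0,0,0,0]], [[1,1,1,-1,-1,-1,-1,1], [2,2,0,0,0,0,0,0]], [[1,1,1,-1,-1,-1,1,-1], [2,2,0,0,0,0,0,0]], [[1,1,1,-1,-1,1,-1,-1], [2,2,0,0,0,0,0,0]], [[1,1,1,-1,-1,1,1,1], [2,2,0,0,0,0,0,0]], [[1,1,1,-1,1,-1,-1,-1], [2,2,0,0,0,0,0,0]], [[1,1,1,-1,1,-1,1,1], [2,2,0,0,0,0,0,0]], [[1,1,1,-1,1,1,-1,1], [2,2,0,0,0,0,0,0]], [[1,1,1,-1,1,1,1,-1], [2,2,0,0,0,0,0,0]], [[1,1,1,1,-1,-1,-1,-1], [2,2,0,0,0,0,0,0]], [[1,1,1,1,-1,-1,1,1], [2,2,0,0,0,0,0,0]], [[1,1,1,1,-1,1,-1,1], [2,2,0,0,0,0,0,0]], [[1,1,1,1,-1,1,1,-1], [2,2,0,0,0,0,0,0]], [[1,1,1,1,1,-1,-1,1], [2,2,0,0,0,0,0,0]], [[1,1,1,1,1,-1,1,-1],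 [2,2,0,0,0,0,0,0]], [[1,1,1,1,1,1,-1,-1], [2,2,0,0,0,0,0,0]], [[1,1,1,1,1,1,1,1], [2,2,0,0,0,0,0,0]], [[2,2,0,0,0,0,0,0]], [[2,2,0,0,0,0,0,0]], [[2,2,0,0,0,0,0,0]], [[2,2,0,0,0,0,0,0]], [[2,2,0,0,0,0,0,0]], [[2,2,0,0,0,0,0,0]], [[2,2,0,0,0,0,0,0]], [[2,2,0,0,0,0,0,0]], [[2,2,0,0,0,0,0,0]], [[2,2,0,0,0,0,0,0]], [[2,2,0,0,0,0,0,0]], [[2,2,0,0,0,0,0,0]], [[2,2,0,0,0,0,0,0]], [[2,2,0,0,0,0,0,0]], [[2,2,0,0,0,0,0,0]], [[2,2,0,0,0,0,0,0]], [[2,2,0,0,0,0,0,0]], [[2,2,0,0,0,0,0,0]], [[2,2,0,0,0,0,0,0]], [[2,2,0,0,0,0,0,0]], [[2,2,0,0,0,0,0,0]], [[2,2,0,0,0,0,0,0]], [[2,2,0,0,0,0,0,0]], [[2,2,0,0,0,0,0,0]], [[2,2,0,0,0,0,0,0]], [[2,2,0,0,0,0,0,0]], [[2,2,0,0,0,0,0,0]], [[2,2,0,0,0,0,0,0]], [[2,2,0,0,0,0,0,0]], [[2,2,0,0,0,0,0,0]], [[2,2,0,0,0,0,0,0]], [[2,2,0,0,0,0,0,0]]]"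

definition PT4 :: "int list list list" where "PT4 = [[], [[-1,-1,1,-1,-1,-1,-1,1], [-2,-2,0,0,0,0,0,0]], [[-1,-1,1,-1,-1,-1,-1,1], [-2,-2,0,0,0,0,0,0]], [[-1,-1,1,-1,-1,-1,-1,1], [-2,-2,0,0,0,0,0,0]], [[-1,-1,1,-1,-1,-1,-1,1], [-2,-2,0,0,0,0,0,0]], [[-1,-1,1,-1,-1,-1,1,-1], [-2,-2,0,0,0,0,0,0]], [[-1,-1,1,-1,-1,-1,-1,1], [-2,-2,0,0,0,0,0,0]], [[-1,-1,1,-1,-1,-1,1,-1], [-2,-2,0,0,0,0,0,0]], [[-1,-1,1,-1,-1,1,-1,-1], [-2,-2,0,0,0,0,0,0]], [[-1,-1,1,-1,1,-1,-1,-1], [-2,-2,0,0,0,0,0,0]], [[-1,-1,1,1,-1,-1,-1,-1], [-2,-2,0,0,0,0,0,0]], [[-2,-2,0,0,0,0,0,0]], [[-2,-2,0,0,0,0,0,0]], [[-2,-2,0,0,0,0,0,0]], [[-2,-2,0,0,0,0,0,0]], [[-2,-2,0,0,0,0,0,0]], [[-2,-2,0,0,0,0,0,0]], [[-2,-2,0,0,0,0,0,0]], [[-2,-2,0,0,0,0,0,0]], [[-2,-2,0,0,0,0,0,0]], [[-2,-2,0,0,0,0,0,0]], [[-2,-2,0,0,0,0,0,0]], [[-2,-2,0,0,0,0,0,0]], [[-2,-2,0,0,0,0,0,0]], [[-2,-2,0,0,0,0,0,0]], [[-2,-2,0,0,0,0,0,0]], [[-2,-2,0,0,0,0,0,0]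]]"


lemma RI_eq: "genE 8 8 @ filter (\<lambda>k. sum_list k mod 4 = 0) (genO 8) = RIlit"
  by (simp add: RIlit_def numeral_eq_Suc)

lemma genE_complete: "set k \<subseteq> {-2,0,2} \<Longrightarrow> k \<in> set (genE (length k) (sum_list (map (\<lambda>x. x*x) k)))"
proof (induction k)
  case Nil then show ?case by simp
next
  case (Cons x k)
  have "0 \<le> sum_list (map (\<lambda>x. x*x) k)" by (induction k) auto
  then show ?case using Cons by auto
qed

lemma genO_complete: "set k \<subseteq> {-1,1} \<Longrightarrow> k \<in> set (genO (length k))"
  by (induction k) auto

lemma sq_le8: assumes "(x::int)*x \<le> 8" shows "x \<in> {-2,-1,0,1,2}"
proof -
  have "x \<le> 2"
  proof (rule ccontr)
    assume "\<not> x \<le> 2" then have "x \<ge> 3" by simp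
    then have "x*x \<ge> 3*3" by (intro mult_mono) auto
    then show False using assms by simp
  qed
  moreover have "x \<ge> -2"
  proof (rule ccontr)
    assume "\<not> x \<ge> -2" then have "-x \<ge> 3" by simp
    then have "(-x)*(-x) \<ge> 3*3" by (intro mult_mono) auto
    then show False using assms by simp
  qed
  ultimately show ?thesis by auto
qed

lemma sumsq_nonneg: "0 \<le> sum_list (map (\<lambda>x. (x::int)*x) k)"
  by (induction k) auto

lemma sumsq_mem: "x \<in> set k \<Longrightarrow> x*x \<le> sum_list (map (\<lambda>x. (x::int)*x) k)"
proof (induction k)
  case Nil then show ?case by simp
next
  case (Cons y k)
  have S: "0 \<le> sum_list (map (\<lambda>x. x*x) k)" using sumsq_nonneg by auto
  have yy: "0 \<le> y*y" by simp
  show ?case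
  proof (cases "x = y")
    case True then show ?thesis using S by simp
  next
    case False
    then have "x*x \<le> sum_list (map (\<lambda>x. x*x) k)" using Cons by simp
    then show ?thesis using yy by (simp add: add_increasing)
  qed
qed

lemma okI_RI: assumes "okI k" shows "k \<in> set RIlit"
proof -
  have l: "length k = 8" and sq: "sum_list (map (\<lambda>x. x*x) k) = 8" and m4: "sum_list k mod 4 = 0"
    using assms by (auto simp: okI_def)
  have b: "\<And>x. x \<in> set k \<Longrightarrow> x \<in> {-2,-1,0,1,2}" using sumsq_mem sq sq_le8 by metis
  consider "\<forall>x\<in>set k. x mod 2 = 0" | "\<forall>x\<in>set k. x mod 2 = 1" using assms by (auto simp: okI_def)
  then show ?thesis
  proof cases
    case 1
    have "set k \<subseteq> {-2,0,2}"
    proof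
      fix x assume x: "x \<in> set k"
      then have "x \<in> {-2,-1,0,1,2}" "x mod 2 = 0" using b 1 by auto
      then show "x \<in> {-2,0,2}" by auto
    qed
    then have "k \<in> set (genE 8 8)" using genE_complete l sq by metis
    then show ?thesis using RI_eq[symmetric] by (metis UnI1 set_append)
  next
    case 2
    have "set k \<subseteq> {-1,1}"
    proof
      fix x assume x: "x \<in> set k"
      then have "x \<in> {-2,-1,0,1,2}" "x mod 2 = 1" using b 2 by auto
      then show "x \<in> {-1,1}" by auto
    qed
    then have "k \<in> set (genO 8)" using genO_complete l by metis
    then have "k \<in> set (filter (\<lambda>k. sum_list k mod 4 = 0) (genO 8))" using m4 by simp
    then show ?thesis using RI_eq[symmetric] by (metis UnI2 set_append)
  qed
qed

lemma hv_RT_okI: assumes "length k = 8" "hv k \<in> RT" shows "okI k"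
proof -
  obtain a0 a1 a2 a3 a4 a5 a6 a7 where a: "k = [a0,a1,a2,a3,a4,a5,a6,a7]" using len8[OF assms(1)] by blast
  have "sqn (hv k) = of_int (a0*a0+a1*a1+a2*a2+a3*a3+a4*a4+a5*a5+a6*a6+a7*a7) / 4"
    unfolding a sqn_def by (simp add: ip8 sum8 hv_def field_simps)
  then have "of_int (a0*a0+a1*a1+a2*a2+a3*a3+a4*a4+a5*a5+a6*a6+a7*a7) = (8::real)"
    using assms(2) by (simp add: RT_iff)
  then have sq: "a0*a0+a1*a1+a2*a2+a3*a3+a4*a4+a5*a5+a6*a6+a7*a7 = 8" by linarith
  have "(\<Sum>i<8. hv k ! i)/2 = of_int (a0+a1+a2+a3+a4+a5+a6+a7) / 4"
    unfolding a by (simp add: sum8 hv_def field_simps)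
  moreover have "(\<Sum>i<8. hv k ! i)/2 \<in> \<int>" using assms(2) by (simp add: RT_iff E8_iff)
  ultimately obtain m where "of_int (a0+a1+a2+a3+a4+a5+a6+a7) / 4 = (of_int m :: real)" by (metis Ints_cases)
  then have "of_int (a0+a1+a2+a3+a4+a5+a6+a7) = (of_int (4*m) :: real)" by simp
  then have "a0+a1+a2+a3+a4+a5+a6+a7 = 4*m" by (simp only: of_int_eq_iff)
  then have m4: "sum_list k mod 4 = 0" unfolding a by (simp add: add.assoc)
  have par: "(\<forall>x\<in>set k. x mod 2 = 0) \<or> (\<forall>x\<in>set k. x mod 2 = 1)"
  proof (cases "intv (hv k)")
    case True
    have "\<forall>x\<in>set k. x mod 2 = 0"
    proof
      fix x assume "x \<in> set k"
      then obtain i where i: "i < 8" "k!i = x" using assms(1) by (metis in_set_conv_nth)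
      then have "of_int x / 2 \<in> (\<int>::real set)" using True assms(1) by (auto simp: intv_def hv_def)
      then obtain n where "of_int x / 2 = (of_int n :: real)" by (metis Ints_cases)
      then have "of_int x = (of_int (2*n) :: real)" by simp
      then have "x = 2*n" by (simp only: of_int_eq_iff)
      then show "x mod 2 = 0" by simp
    qed
    then show ?thesis by simp
  next
    case False
    then have h: "halfv (hv k)" using assms(2) by (simp add: RT_iff E8_iff)
    have "\<forall>x\<in>set k. x mod 2 = 1"
    proof
      fix x assume "x \<in> set k"
      then obtain i where i: "i < 8" "k!i = x" using assms(1) by (metis in_set_conv_nth)
      then have "of_int x / 2 - 1/2 \<in> (\<int>::real set)" using h assms(1) by (auto simp: halfv_def hv_def)
      then obtain n where "of_int x / 2 - 1/2 = (of_int n :: real)" by (metis Ints_cases)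
      then have "of_int x = (of_int (2*n+1) :: real)" by (simp add: field_simps)
      then have "x = 2*n+1" by (simp only: of_int_eq_iff)
      then show "x mod 2 = 1" by simp
    qed
    then show ?thesis by simp
  qed
  show ?thesis unfolding okI_def using sq m4 par assms(1) unfolding a by (simp add: add.assoc)
qed

definition kv :: "real list \<Rightarrow> int list" where "kv v = map (\<lambda>x. \<lfloor>2*x\<rfloor>) v"

lemma E8_hv: assumes "v \<in> E8" shows "hv (kv v) = v"
proof -
  have l: "length v = 8" using assms by (simp add: E8_iff)
  have "\<forall>i<8. 2 * v!i \<in> \<int>"
  proof (cases "intv v")
    case True then show ?thesis by (auto simp: intv_def)
  next
    case False
    then have h: "halfv v" using assms by (simp add: E8_iff)
    show ?thesis
    proof (intro allI impI)
      fix i :: nat assume "i < 8"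
      then have a: "v!i - 1/2 \<in> \<int>" using h by (simp add: halfv_def)
      have two: "(2::real) \<in> \<int>" by simp
      have "2 * (v!i - 1/2) + 1 \<in> \<int>" by (rule Ints_add[OF Ints_mult[OF two a] Ints_1])
      then show "2 * v!i \<in> \<int>" by (simp add: algebra_simps)
    qed
  qed
  then show ?thesis using l by (intro nth_equalityI) (auto simp: hv_def kv_def)
qed

lemma RT_hv: assumes "r \<in> RT" shows "r \<in> hv ` set RIlit"
proof -
  have e: "hv (kv r) = r" using E8_hv assms by (simp add: RT_iff)
  have "length (kv r) = 8" using RT_len[OF assms] by (simp add: kv_def)
  then have "okI (kv r)" using hv_RT_okI e assms by simp
  then have "kv r \<in> set RIlit" by (rule okI_RI)
  then show ?thesis using e by force
qed

lemma RI_ok: "list_all okI RIlit"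
  by (simp add: RIlit_def okI_def)

lemma RT_eq: "RT = hv ` set RIlit"
proof
  show "RT \<subseteq> hv ` set RIlit" using RT_hv by blast
  show "hv ` set RIlit \<subseteq> RT" using RI_ok okI_RT by (auto simp: list_all_iff)
qed

fun chainI :: "int list list \<Rightarrow> int list \<Rightarrow> int list list \<Rightarrow> int list \<Rightarrow> bool" where
  "chainI F x [] y = (x = y)"
| "chainI F x (w#ws) y = (okI w \<and> ipi x w = 4 \<and> list_all (\<lambda>f. ipi f x = ipi f w) F \<and> chainI F w ws y)"

lemma chain_sem:
  "chainI F x ws y \<Longrightarrow> okI x \<Longrightarrow> list_all (\<lambda>f. length f = 8) F \<Longrightarrow>
    \<exists>g. Aut g \<and> g (hv x) = hv y \<and> (\<forall>f\<in>set F. g (hv f) = hv f)"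
proof (induction ws arbitrary: x)
  case Nil
  have "id (hv x) = hv y" using Nil by simp
  moreover have "\<forall>f\<in>set F. id (hv f) = hv f" by simp
  ultimately show ?case using Aut_id by blast
next
  case (Cons w ws)
  have ow: "okI w" and ixw: "ipi x w = 4" and fF: "list_all (\<lambda>f. ipi f x = ipi f w) F"
    and ch: "chainI F w ws y" using Cons.prems by auto
  obtain g' where g': "Aut g'" "g' (hv w) = hv y" "\<forall>f\<in>set F. g' (hv f) = hv f"
    using Cons.IH[OF ch ow Cons.prems(3)] by blast
  have lx: "length x = 8" and lw: "length w = 8" using Cons.prems(2) ow by (auto simp: okI_def)
  have X: "hv x \<in> RT" and W: "hv w \<in> RT" using okI_RT Cons.prems(2) ow by auto
  have ipXW: "ip (hv x) (hv w) = 1" using ip_hv[OF lx lw] ixw by simp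
  define a where "a = vsub (hv x) (hv w)"
  have aR: "a \<in> RT" unfolding a_def using RT_vsub[OF X W ipXW] .
  have sw: "rfl a (hv x) = hv w" unfolding a_def by (rule rfl_swap[OF X W ipXW])
  have fixF: "\<forall>f\<in>set F. rfl a (hv f) = hv f"
  proof
    fix f assume f: "f \<in> set F"
    have lf: "length f = 8" using f Cons.prems(3) by (simp add: list_all_iff)
    have "ipi f x = ipi f w" using f fF by (simp add: list_all_iff)
    then have "ip (hv f) a = 0" unfolding a_def using lf lx lw
      by (simp add: ip_lin ip_hv)
    then show "rfl a (hv f) = hv f" using lf by (intro rfl_fix) auto
  qed
  have "Aut (g' \<circ> rfl a)" using Aut_comp[OF g'(1) Aut_rfl[OF aR]] .
  moreover have "(g' \<circ> rfl a) (hv x) = hv y" using sw g'(2) by simp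
  moreover have "\<forall>f\<in>set F. (g' \<circ> rfl a) (hv f) = hv f" using fixF g'(3) by simp
  ultimately show ?case by blast
qed

lemma la2_ex: "list_all2 P xs ys \<Longrightarrow> x \<in> set xs \<Longrightarrow> \<exists>y. P x y"
  by (induction rule: list_all2_induct) auto

definition "k0 = [2,-2,0,0,0,0,0,0::int]"
definition "kp2 = [0,2,-2,0,0,0,0,0::int]"
definition "kq2 = [2,2,0,0,0,0,0,0::int]"
definition "ku = [-2,-2,0,0,0,0,0,0::int]"

lemma PT1_ok: "list_all2 (\<lambda>x ws. chainI [] x ws k0) RIlit PT1"
  by (simp add: RIlit_def PT1_def okI_def ipi_def k0_def)
lemma PT2_ok: "list_all2 (\<lambda>x ws. chainI [k0] x ws kp2) (filter (\<lambda>k. ipi k0 k = -4) RIlit) PT2"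
  by (simp add: RIlit_def PT2_def okI_def ipi_def k0_def kp2_def)
lemma PT3_ok: "list_all2 (\<lambda>x ws. chainI [k0] x ws kq2) (filter (\<lambda>k. ipi k0 k = 0) RIlit) PT3"
  by (simp add: RIlit_def PT3_def okI_def ipi_def k0_def kq2_def)
lemma PT4_ok: "list_all2 (\<lambda>x ws. chainI [k0,kp2] x ws ku) (filter (\<lambda>k. ipi kp2 k = -4 \<and> ipi k0 k = 0) RIlit) PT4"
  by (simp add: RIlit_def PT4_def okI_def ipi_def k0_def kp2_def ku_def)

lemma cnt2: "length (filter (\<lambda>k. ipi k0 k = -4) RIlit) = 56"
  by (simp add: RIlit_def ipi_def k0_def)
lemma cnt0: "length (filter (\<lambda>k. ipi k0 k = 0) RIlit) = 126"
  by (simp add: RIlit_def ipi_def k0_def)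
lemma cnt3: "length (filter (\<lambda>k. ipi kp2 k = -4 \<and> ipi k0 k = 0) RIlit) = 27"
  by (simp add: RIlit_def ipi_def k0_def kp2_def)

abbreviation "R0 \<equiv> hv k0"
abbreviation "P2 \<equiv> hv kp2"
abbreviation "Q2 \<equiv> hv kq2"
abbreviation "U0 \<equiv> hv ku"

lemma lens[simp]: "length k0 = 8" "length kp2 = 8" "length kq2 = 8" "length ku = 8"
  by (simp_all add: k0_def kp2_def kq2_def ku_def)

lemma RI_okI: "k \<in> set RIlit \<Longrightarrow> okI k"
  using RI_ok by (simp add: list_all_iff)

lemma RT_obtain: assumes "r \<in> RT" obtains k where "k \<in> set RIlit" "r = hv k" "okI k" "length k = 8"
  using assms RT_eq RI_okI by (auto simp: okI_def)

lemma T1: assumes "r \<in> RT" shows "\<exists>g. Aut g \<and> g r = R0"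
proof -
  obtain k where k: "k \<in> set RIlit" "r = hv k" "okI k" using RT_obtain[OF assms] by metis
  obtain ws where "chainI [] k ws k0" using la2_ex[OF PT1_ok k(1)] by blast
  from chain_sem[OF this k(3)] show ?thesis using k(2) by auto
qed

lemma T2: assumes "r \<in> RT" "s \<in> RT" "ip r s = -1" shows "\<exists>g. Aut g \<and> g r = R0 \<and> g s = P2"
proof -
  obtain g1 where g1: "Aut g1" "g1 r = R0" using T1[OF assms(1)] by blast
  have s': "g1 s \<in> RT" using Aut_RT[OF g1(1) assms(2)] .
  have "ip R0 (g1 s) = -1" using Aut_ip[OF g1(1) RT_len[OF assms(1)] RT_len[OF assms(2)]] g1(2) assms(3) by simp
  obtain k where k: "k \<in> set RIlit" "g1 s = hv k" "okI k" "length k = 8" using RT_obtain[OF s'] by metis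
  have "ipi k0 k = -4" using \<open>ip R0 (g1 s) = -1\<close> k(2,4) ip_hv[of k0 k] by simp
  then have "k \<in> set (filter (\<lambda>k. ipi k0 k = -4) RIlit)" using k(1) by simp
  then obtain ws where "chainI [k0] k ws kp2" using la2_ex[OF PT2_ok] by blast
  from chain_sem[OF this k(3)] obtain g2 where g2: "Aut g2" "g2 (hv k) = P2" "g2 R0 = R0" by auto
  have "Aut (g2 \<circ> g1)" using Aut_comp g1 g2 by blast
  then show ?thesis using g1 g2 k(2) by (intro exI[of _ "g2 \<circ> g1"]) simp
qed

lemma T3: assumes "r \<in> RT" "s \<in> RT" "ip r s = 0" shows "\<exists>g. Aut g \<and> g r = R0 \<and> g s = Q2"
proof -
  obtain g1 where g1: "Aut g1" "g1 r = R0" using T1[OF assms(1)] by blast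
  have s': "g1 s \<in> RT" using Aut_RT[OF g1(1) assms(2)] .
  have "ip R0 (g1 s) = 0" using Aut_ip[OF g1(1) RT_len[OF assms(1)] RT_len[OF assms(2)]] g1(2) assms(3) by simp
  obtain k where k: "k \<in> set RIlit" "g1 s = hv k" "okI k" "length k = 8" using RT_obtain[OF s'] by metis
  have "ipi k0 k = 0" using \<open>ip R0 (g1 s) = 0\<close> k(2,4) ip_hv[of k0 k] by simp
  then have "k \<in> set (filter (\<lambda>k. ipi k0 k = 0) RIlit)" using k(1) by simp
  then obtain ws where "chainI [k0] k ws kq2" using la2_ex[OF PT3_ok] by blast
  from chain_sem[OF this k(3)] obtain g2 where g2: "Aut g2" "g2 (hv k) = Q2" "g2 R0 = R0" by auto
  have "Aut (g2 \<circ> g1)" using Aut_comp g1 g2 by blast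
  then show ?thesis using g1 g2 k(2) by (intro exI[of _ "g2 \<circ> g1"]) simp
qed

lemma T4: assumes "r \<in> RT" "s \<in> RT" "u \<in> RT" "ip r s = -1" "ip s u = -1" "ip r u = 0"
  shows "\<exists>g. Aut g \<and> g r = R0 \<and> g s = P2 \<and> g u = U0"
proof -
  obtain g1 where g1: "Aut g1" "g1 r = R0" "g1 s = P2" using T2[OF assms(1,2,4)] by blast
  have u': "g1 u \<in> RT" using Aut_RT[OF g1(1) assms(3)] .
  have "ip R0 (g1 u) = 0" using Aut_ip[OF g1(1) RT_len[OF assms(1)] RT_len[OF assms(3)]] g1(2) assms(6) by simp
  moreover have "ip P2 (g1 u) = -1" using Aut_ip[OF g1(1) RT_len[OF assms(2)] RT_len[OF assms(3)]] g1(3) assms(5) by simp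
  moreover obtain k where k: "k \<in> set RIlit" "g1 u = hv k" "okI k" "length k = 8" using RT_obtain[OF u'] by metis
  ultimately have "ipi k0 k = 0" "ipi kp2 k = -4" using ip_hv[of k0 k] ip_hv[of kp2 k] by simp_all
  then have "k \<in> set (filter (\<lambda>k. ipi kp2 k = -4 \<and> ipi k0 k = 0) RIlit)" using k(1) by simp
  then obtain ws where "chainI [k0,kp2] k ws ku" using la2_ex[OF PT4_ok] by blast
  from chain_sem[OF this k(3)] obtain g2 where g2: "Aut g2" "g2 (hv k) = U0" "g2 R0 = R0" "g2 P2 = P2" by auto
  have "Aut (g2 \<circ> g1)" using Aut_comp g1 g2 by blast
  then show ?thesis using g1 g2 k(2) by (intro exI[of _ "g2 \<circ> g1"]) simp
qed

lemma card_le_filter: assumes "A \<subseteq> hv ` set (filter P RIlit)" "length (filter P RIlit) = n"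
  shows "card A \<le> n"
proof -
  have "card A \<le> card (hv ` set (filter P RIlit))" using assms(1) by (intro card_mono) auto
  also have "\<dots> \<le> card (set (filter P RIlit))" by (rule card_image_le) simp
  also have "\<dots> \<le> length (filter P RIlit)" by (rule card_length)
  finally show ?thesis using assms(2) by simp
qed

lemma card_via_aut: assumes "Aut g" "A \<subseteq> RT" "g ` A \<subseteq> B" "finite B" shows "card A \<le> card B"
proof -
  have "inj_on g A" using inj_on_subset[OF Aut_inj[OF assms(1)]] assms(2) RT_len by blast
  then have "card A = card (g ` A)" by (simp add: card_image)
  also have "\<dots> \<le> card B" using assms(4,3) by (rule card_mono)
  finally show ?thesis .
qed

lemma finite_RT: "finite RT" using RT_eq by simp

lemma C2: assumes "r \<in> RT" shows "card {s\<in>RT. ip r s = -1} \<le> 56"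
proof -
  obtain g where g: "Aut g" "g r = R0" using T1[OF assms] by blast
  have "g ` {s\<in>RT. ip r s = -1} \<subseteq> {s\<in>RT. ip R0 s = -1}"
    using g Aut_RT Aut_ip[OF g(1) RT_len[OF assms]] RT_len by fastforce
  then have "card {s\<in>RT. ip r s = -1} \<le> card {s\<in>RT. ip R0 s = -1}"
    by (intro card_via_aut[OF g(1)]) (auto simp: finite_RT)
  also have "\<dots> \<le> 56"
  proof (rule card_le_filter[OF _ cnt2])
    show "{s\<in>RT. ip R0 s = -1} \<subseteq> hv ` set (filter (\<lambda>k. ipi k0 k = -4) RIlit)"
    proof
      fix s assume s: "s \<in> {s\<in>RT. ip R0 s = -1}"
      then obtain k where k: "k \<in> set RIlit" "s = hv k" "length k = 8" using RT_obtain by blast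
      have "ipi k0 k = -4" using s k ip_hv[of k0 k] by simp
      then show "s \<in> hv ` set (filter (\<lambda>k. ipi k0 k = -4) RIlit)" using k by auto
    qed
  qed
  finally show ?thesis .
qed

lemma C0: assumes "r \<in> RT" shows "card {s\<in>RT. ip r s = 0} \<le> 126"
proof -
  obtain g where g: "Aut g" "g r = R0" using T1[OF assms] by blast
  have "g ` {s\<in>RT. ip r s = 0} \<subseteq> {s\<in>RT. ip R0 s = 0}"
    using g Aut_RT Aut_ip[OF g(1) RT_len[OF assms]] RT_len by fastforce
  then have "card {s\<in>RT. ip r s = 0} \<le> card {s\<in>RT. ip R0 s = 0}"
    by (intro card_via_aut[OF g(1)]) (auto simp: finite_RT)
  also have "\<dots> \<le> 126"
  proof (rule card_le_filter[OF _ cnt0])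
    show "{s\<in>RT. ip R0 s = 0} \<subseteq> hv ` set (filter (\<lambda>k. ipi k0 k = 0) RIlit)"
    proof
      fix s assume s: "s \<in> {s\<in>RT. ip R0 s = 0}"
      then obtain k where k: "k \<in> set RIlit" "s = hv k" "length k = 8" using RT_obtain by blast
      have "ipi k0 k = 0" using s k ip_hv[of k0 k] by simp
      then show "s \<in> hv ` set (filter (\<lambda>k. ipi k0 k = 0) RIlit)" using k by auto
    qed
  qed
  finally show ?thesis .
qed

lemma C3: assumes "r \<in> RT" "s \<in> RT" "ip r s = -1"
  shows "card {u\<in>RT. ip s u = -1 \<and> ip r u = 0} \<le> 27"
proof -
  obtain g where g: "Aut g" "g r = R0" "g s = P2" using T2[OF assms] by blast
  have "g ` {u\<in>RT. ip s u = -1 \<and> ip r u = 0} \<subseteq> {u\<in>RT. ip P2 u = -1 \<and> ip R0 u = 0}"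
    using g Aut_RT Aut_ip[OF g(1) RT_len[OF assms(1)]] Aut_ip[OF g(1) RT_len[OF assms(2)]] RT_len by fastforce
  then have "card {u\<in>RT. ip s u = -1 \<and> ip r u = 0} \<le> card {u\<in>RT. ip P2 u = -1 \<and> ip R0 u = 0}"
    by (intro card_via_aut[OF g(1)]) (auto simp: finite_RT)
  also have "\<dots> \<le> 27"
  proof (rule card_le_filter[OF _ cnt3])
    show "{u\<in>RT. ip P2 u = -1 \<and> ip R0 u = 0} \<subseteq> hv ` set (filter (\<lambda>k. ipi kp2 k = -4 \<and> ipi k0 k = 0) RIlit)"
    proof
      fix s assume s: "s \<in> {u\<in>RT. ip P2 u = -1 \<and> ip R0 u = 0}"
      then obtain k where k: "k \<in> set RIlit" "s = hv k" "length k = 8" using RT_obtain by blast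
      have "ipi k0 k = 0" "ipi kp2 k = -4" using s k ip_hv[of k0 k] ip_hv[of kp2 k] by simp_all
      then show "s \<in> hv ` set (filter (\<lambda>k. ipi kp2 k = -4 \<and> ipi k0 k = 0) RIlit)" using k by auto
    qed
  qed
  finally show ?thesis .
qed

lemma lt8: "{..<8::nat} = {0,1,2,3,4,5,6,7}" by (auto simp: eval_nat_numeral)
lemma lt6: "{..<6::nat} = {0,1,2,3,4,5}" by (auto simp: eval_nat_numeral)
lemma lt5: "{..<5::nat} = {0,1,2,3,4}" by (auto simp: eval_nat_numeral)
lemma all8: "(\<forall>i<(8::nat). P i) \<longleftrightarrow> P 0 \<and> P 1 \<and> P 2 \<and> P 3 \<and> P 4 \<and> P 5 \<and> P 6 \<and> P 7"
proof -
  have "(\<forall>i<(8::nat). P i) = (\<forall>i\<in>{..<8::nat}. P i)" by auto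
  then show ?thesis unfolding lt8 by simp
qed
lemma all6: "(\<forall>i<(6::nat). P i) \<longleftrightarrow> P 0 \<and> P 1 \<and> P 2 \<and> P 3 \<and> P 4 \<and> P 5"
proof -
  have "(\<forall>i<(6::nat). P i) = (\<forall>i\<in>{..<6::nat}. P i)" by auto
  then show ?thesis unfolding lt6 by simp
qed
lemma all5: "(\<forall>i<(5::nat). P i) \<longleftrightarrow> P 0 \<and> P 1 \<and> P 2 \<and> P 3 \<and> P 4"
proof -
  have "(\<forall>i<(5::nat). P i) = (\<forall>i\<in>{..<5::nat}. P i)" by auto
  then show ?thesis unfolding lt5 by simp
qed
lemma sum6: "(\<Sum>i<(6::nat). f i) = f 0 + f 1 + f 2 + f 3 + f 4 + (f 5 :: 'a::comm_monoid_add)"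
  by (simp add: numeral_eq_Suc lessThan_Suc ac_simps)
lemma sum5: "(\<Sum>i<(5::nat). f i) = f 0 + f 1 + f 2 + f 3 + (f 4 :: 'a::comm_monoid_add)"
  by (simp add: numeral_eq_Suc lessThan_Suc ac_simps)

lemma half_nonint: "(x::real) = 0 \<Longrightarrow> x - 1/2 \<in> \<int> \<Longrightarrow> False"
proof -
  assume "x = 0" "x - 1/2 \<in> \<int>"
  then obtain n where n: "x - 1/2 = of_int n" by (blast elim: Ints_cases)
  then have "(of_int n :: real) = - 1/2" using \<open>x = 0\<close> by simp
  then have "(of_int (2*n) :: real) = of_int (-1)" by simp
  then have "2*n = -1" by (simp only: of_int_eq_iff)
  then show False by presburger
qed

lemma E8_zero_intv: assumes "l \<in> E8" "l!0 = 0" shows "intv l"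
proof -
  have "\<not> halfv l"
  proof
    assume "halfv l" then have "l!0 - 1/2 \<in> \<int>" unfolding halfv_def by simp
    then show False using half_nonint assms(2) by blast
  qed
  then show ?thesis using assms(1) by (simp add: E8_iff)
qed

lemma D6_of: assumes "[0,0,a2,a3,a4,a5,a6,a7] \<in> E8" shows "[a2,a3,a4,a5,a6,a7] \<in> D6"
proof -
  have "intv [0,0,a2,a3,a4,a5,a6,a7]" using E8_zero_intv[OF assms] by simp
  then have i: "a2 \<in> \<int>" "a3 \<in> \<int>" "a4 \<in> \<int>" "a5 \<in> \<int>" "a6 \<in> \<int>" "a7 \<in> \<int>"
    unfolding intv_def all8 by simp_all
  have "(\<Sum>i<8. [0,0,a2,a3,a4,a5,a6,a7] ! i)/2 \<in> \<int>" using assms by (simp only: E8_iff)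
  then have s: "(a2+a3+a4+a5+a6+a7)/2 \<in> \<int>" by (simp add: sum8)
  show ?thesis unfolding D6_def Dn_def all6 using i s by (simp add: sum6)
qed

lemma E8_of6: assumes "[b0,b1,b2,b3,b4,b5::real] \<in> D6" shows "[0,0,b0,b1,b2,b3,b4,b5] \<in> E8"
proof -
  have "intv [0,0,b0,b1,b2,b3,b4,b5]"
    using assms unfolding D6_def Dn_def intv_def all6 all8 by simp
  moreover have "(\<Sum>i<8. [0,0,b0,b1,b2,b3,b4,b5] ! i) / 2 \<in> \<int>"
    using assms unfolding D6_def Dn_def by (simp add: sum6 sum8)
  ultimately show ?thesis by (simp add: E8_iff)
qed

lemma D5_of: assumes "[0,0,0,a3,a4,a5,a6,a7] \<in> E8" shows "[a3,a4,a5,a6,a7] \<in> D5"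
proof -
  have "intv [0,0,0,a3,a4,a5,a6,a7]" using E8_zero_intv[OF assms] by simp
  then have i: "a3 \<in> \<int>" "a4 \<in> \<int>" "a5 \<in> \<int>" "a6 \<in> \<int>" "a7 \<in> \<int>"
    unfolding intv_def all8 by simp_all
  have "(\<Sum>i<8. [0,0,0,a3,a4,a5,a6,a7] ! i)/2 \<in> \<int>" using assms by (simp only: E8_iff)
  then have s: "(a3+a4+a5+a6+a7)/2 \<in> \<int>" by (simp add: sum8)
  show ?thesis unfolding D5_def Dn_def all5 using i s by (simp add: sum5)
qed

lemma E8_of5: assumes "[b0,b1,b2,b3,b4::real] \<in> D5" shows "[0,0,0,b0,b1,b2,b3,b4] \<in> E8"
proof -
  have "intv [0,0,0,b0,b1,b2,b3,b4]"
    using assms unfolding D5_def Dn_def intv_def all5 all8 by simp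
  moreover have "(\<Sum>i<8. [0,0,0,b0,b1,b2,b3,b4] ! i) / 2 \<in> \<int>"
    using assms unfolding D5_def Dn_def by (simp add: sum5 sum8)
  ultimately show ?thesis by (simp add: E8_iff)
qed

lemma sqn6: "sqn [0,0,a2,a3,a4,a5,a6,a7] = sqn [a2,a3,a4,a5,a6,a7]"
  by (simp add: sqn_def ip_def sum8 sum6)
lemma sqn5: "sqn [0,0,0,a3,a4,a5,a6,a7] = sqn [a3,a4,a5,a6,a7]"
  by (simp add: sqn_def ip_def sum8 sum5)

lemma ip_R0: "ip R0 l = l!0 - l!1"
  by (simp add: ip_def hv_def k0_def sum8)
lemma ip_P2: "ip P2 l = l!1 - l!2"
  by (simp add: ip_def hv_def kp2_def sum8 numeral_2_eq_2)
lemma ip_Q2: "ip Q2 l = l!0 + l!1"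
  by (simp add: ip_def hv_def kq2_def sum8)
lemma ip_U0: "ip U0 l = - l!0 - l!1"
  by (simp add: ip_def hv_def ku_def sum8)

lemma len6: assumes "length k = 6"
  obtains a0 a1 a2 a3 a4 a5 where "k = [a0,a1,a2,a3,a4,a5]"
proof -
  have "k = [k!0,k!1,k!2,k!3,k!4,k!5]"
    using assms by (intro nth_equalityI) (auto simp: less_Suc_eq nth_Cons' eval_nat_numeral)
  then show ?thesis using that by blast
qed
lemma len5: assumes "length k = 5"
  obtains a0 a1 a2 a3 a4 where "k = [a0,a1,a2,a3,a4]"
proof -
  have "k = [k!0,k!1,k!2,k!3,k!4]"
    using assms by (intro nth_equalityI) (auto simp: less_Suc_eq nth_Cons' eval_nat_numeral)
  then show ?thesis using that by blast
qed

lemma N1: assumes "r \<in> RT" shows "card {l\<in>SS d. ip r l = 0} = NL E7 (2*d)"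
proof -
  obtain g where g: "Aut g" "g r = R0" using T1[OF assms] by blast
  have "card {l\<in>SS d. \<forall>x\<in>{r}. ip x l = 0} = card {l\<in>SS d. \<forall>x\<in>{r}. ip (g x) l = 0}"
    using card_transport[OF g(1), of "{r}"] RT_len[OF assms] by simp
  then have "card {l\<in>SS d. ip r l = 0} = card {l\<in>SS d. ip R0 l = 0}" using g(2) by simp
  also have "{l\<in>SS d. ip R0 l = 0} = {v\<in>E7. sqn v = real (2*d)}"
    by (auto simp: SS_def E7_def ip_R0)
  finally show ?thesis by (simp add: NL_def)
qed

lemma N2: assumes "r \<in> RT" "s \<in> RT" "ip r s = -1"
  shows "card {l\<in>SS d. ip r l = 0 \<and> ip s l = 0} = NL E6 (2*d)"
proof -
  obtain g where g: "Aut g" "g r = R0" "g s = P2" using T2[OF assms] by blast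
  have "card {l\<in>SS d. \<forall>x\<in>{r,s}. ip x l = 0} = card {l\<in>SS d. \<forall>x\<in>{r,s}. ip (g x) l = 0}"
    using card_transport[OF g(1), of "{r,s}"] RT_len[OF assms(1)] RT_len[OF assms(2)] by simp
  then have "card {l\<in>SS d. ip r l = 0 \<and> ip s l = 0} = card {l\<in>SS d. ip R0 l = 0 \<and> ip P2 l = 0}" using g(2,3) by simp
  also have "{l\<in>SS d. ip R0 l = 0 \<and> ip P2 l = 0} = {v\<in>E6. sqn v = real (2*d)}"
    by (auto simp: SS_def E6_def ip_R0 ip_P2)
  finally show ?thesis by (simp add: NL_def)
qed

lemma D6_bij: "card {l\<in>SS d. l!0 = 0 \<and> l!1 = 0} = card {v\<in>D6. sqn v = real (2*d)}"
proof (rule bij_betw_same_card[of "drop 2"], rule bij_betw_byWitness[where f'="\<lambda>v. 0#0#v"])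
  show "\<forall>a\<in>{l\<in>SS d. l!0 = 0 \<and> l!1 = 0}. 0 # 0 # drop 2 a = a"
  proof
    fix l assume l: "l \<in> {l\<in>SS d. l!0 = 0 \<and> l!1 = 0}"
    then have "length l = 8" by (simp add: SS_def E8_iff)
    then obtain a0 a1 a2 a3 a4 a5 a6 a7 where a: "l = [a0,a1,a2,a3,a4,a5,a6,a7]" using len8 by blast
    show "0 # 0 # drop 2 l = l" using l unfolding a by simp
  qed
  show "\<forall>a'\<in>{v\<in>D6. sqn v = real (2*d)}. drop 2 (0#0#a') = a'" by simp
  show "drop 2 ` {l\<in>SS d. l!0 = 0 \<and> l!1 = 0} \<subseteq> {v\<in>D6. sqn v = real (2*d)}"
  proof
    fix v assume "v \<in> drop 2 ` {l\<in>SS d. l!0 = 0 \<and> l!1 = 0}"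
    then obtain l where l: "l \<in> SS d" "l!0 = 0" "l!1 = 0" "v = drop 2 l" by auto
    then have E: "l \<in> E8" and sq: "sqn l = real (2*d)" by (auto simp: SS_def)
    then have "length l = 8" by (simp add: E8_iff)
    then obtain a0 a1 a2 a3 a4 a5 a6 a7 where a: "l = [a0,a1,a2,a3,a4,a5,a6,a7]" using len8 by blast
    have a01: "a0 = 0" "a1 = 0" using l(2,3) unfolding a by simp_all
    have v: "v = [a2,a3,a4,a5,a6,a7]" using l(4) unfolding a by simp
    have E': "[0,0,a2,a3,a4,a5,a6,a7] \<in> E8" using E unfolding a a01 .
    have "v \<in> D6" unfolding v by (rule D6_of[OF E'])
    moreover have "sqn v = real (2*d)" using sq unfolding a a01 v sqn6 .
    ultimately show "v \<in> {v\<in>D6. sqn v = real (2*d)}" by simp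
  qed
  show "(\<lambda>v. 0#0#v) ` {v\<in>D6. sqn v = real (2*d)} \<subseteq> {l\<in>SS d. l!0 = 0 \<and> l!1 = 0}"
  proof
    fix l assume "l \<in> (\<lambda>v. 0#0#v) ` {v\<in>D6. sqn v = real (2*d)}"
    then obtain v where v: "v \<in> D6" "sqn v = real (2*d)" "l = 0#0#v" by auto
    then have "length v = 6" by (simp add: D6_def Dn_def)
    then obtain b0 b1 b2 b3 b4 b5 where b: "v = [b0,b1,b2,b3,b4,b5]" using len6 by blast
    have "l \<in> E8" unfolding v(3) b using E8_of6 v(1) b by simp
    moreover have "sqn l = real (2*d)" using v(2) unfolding v(3) b sqn6 .
    ultimately show "l \<in> {l\<in>SS d. l!0 = 0 \<and> l!1 = 0}" using v(3) by (simp add: SS_def)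
  qed
qed

lemma D5_bij: "card {l\<in>SS d. l!0 = 0 \<and> l!1 = 0 \<and> l!2 = 0} = card {v\<in>D5. sqn v = real (2*d)}"
proof (rule bij_betw_same_card[of "drop 3"], rule bij_betw_byWitness[where f'="\<lambda>v. 0#0#0#v"])
  show "\<forall>a\<in>{l\<in>SS d. l!0 = 0 \<and> l!1 = 0 \<and> l!2 = 0}. 0 # 0 # 0 # drop 3 a = a"
  proof
    fix l assume l: "l \<in> {l\<in>SS d. l!0 = 0 \<and> l!1 = 0 \<and> l!2 = 0}"
    then have "length l = 8" by (simp add: SS_def E8_iff)
    then obtain a0 a1 a2 a3 a4 a5 a6 a7 where a: "l = [a0,a1,a2,a3,a4,a5,a6,a7]" using len8 by blast
    show "0 # 0 # 0 # drop 3 l = l" using l unfolding a by simp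
  qed
  show "\<forall>a'\<in>{v\<in>D5. sqn v = real (2*d)}. drop 3 (0#0#0#a') = a'" by simp
  show "drop 3 ` {l\<in>SS d. l!0 = 0 \<and> l!1 = 0 \<and> l!2 = 0} \<subseteq> {v\<in>D5. sqn v = real (2*d)}"
  proof
    fix v assume "v \<in> drop 3 ` {l\<in>SS d. l!0 = 0 \<and> l!1 = 0 \<and> l!2 = 0}"
    then obtain l where l: "l \<in> SS d" "l!0 = 0" "l!1 = 0" "l!2 = 0" "v = drop 3 l" by auto
    then have E: "l \<in> E8" and sq: "sqn l = real (2*d)" by (auto simp: SS_def)
    then have "length l = 8" by (simp add: E8_iff)
    then obtain a0 a1 a2 a3 a4 a5 a6 a7 where a: "l = [a0,a1,a2,a3,a4,a5,a6,a7]" using len8 by blast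
    have a01: "a0 = 0" "a1 = 0" "a2 = 0" using l(2,3,4) unfolding a by simp_all
    have v: "v = [a3,a4,a5,a6,a7]" using l(5) unfolding a by simp
    have E': "[0,0,0,a3,a4,a5,a6,a7] \<in> E8" using E unfolding a a01 .
    have "v \<in> D5" unfolding v by (rule D5_of[OF E'])
    moreover have "sqn v = real (2*d)" using sq unfolding a a01 v sqn5 .
    ultimately show "v \<in> {v\<in>D5. sqn v = real (2*d)}" by simp
  qed
  show "(\<lambda>v. 0#0#0#v) ` {v\<in>D5. sqn v = real (2*d)} \<subseteq> {l\<in>SS d. l!0 = 0 \<and> l!1 = 0 \<and> l!2 = 0}"
  proof
    fix l assume "l \<in> (\<lambda>v. 0#0#0#v) ` {v\<in>D5. sqn v = real (2*d)}"
    then obtain v where v: "v \<in> D5" "sqn v = real (2*d)" "l = 0#0#0#v" by auto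
    then have "length v = 5" by (simp add: D5_def Dn_def)
    then obtain b0 b1 b2 b3 b4 where b: "v = [b0,b1,b2,b3,b4]" using len5 by blast
    have "l \<in> E8" unfolding v(3) b using E8_of5 v(1) b by simp
    moreover have "sqn l = real (2*d)" using v(2) unfolding v(3) b sqn5 .
    ultimately show "l \<in> {l\<in>SS d. l!0 = 0 \<and> l!1 = 0 \<and> l!2 = 0}" using v(3) by (simp add: SS_def)
  qed
qed

lemma N0: assumes "r \<in> RT" "s \<in> RT" "ip r s = 0"
  shows "card {l\<in>SS d. ip r l = 0 \<and> ip s l = 0} = NL D6 (2*d)"
proof -
  obtain g where g: "Aut g" "g r = R0" "g s = Q2" using T3[OF assms] by blast
  have "card {l\<in>SS d. \<forall>x\<in>{r,s}. ip x l = 0} = card {l\<in>SS d. \<forall>x\<in>{r,s}. ip (g x) l = 0}"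
    using card_transport[OF g(1), of "{r,s}"] RT_len[OF assms(1)] RT_len[OF assms(2)] by simp
  then have "card {l\<in>SS d. ip r l = 0 \<and> ip s l = 0} = card {l\<in>SS d. ip R0 l = 0 \<and> ip Q2 l = 0}" using g(2,3) by simp
  also have "{l\<in>SS d. ip R0 l = 0 \<and> ip Q2 l = 0} = {l\<in>SS d. l!0 = 0 \<and> l!1 = 0}"
    by (auto simp: ip_R0 ip_Q2)
  finally show ?thesis using D6_bij by (simp add: NL_def)
qed

lemma N3: assumes "r \<in> RT" "s \<in> RT" "u \<in> RT" "ip r s = -1" "ip s u = -1" "ip r u = 0"
  shows "card {l\<in>SS d. ip r l = 0 \<and> ip s l = 0 \<and> ip u l = 0} = NL D5 (2*d)"
proof -
  obtain g where g: "Aut g" "g r = R0" "g s = P2" "g u = U0" using T4[OF assms] by blast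
  have "card {l\<in>SS d. \<forall>x\<in>{r,s,u}. ip x l = 0} = card {l\<in>SS d. \<forall>x\<in>{r,s,u}. ip (g x) l = 0}"
    using card_transport[OF g(1), of "{r,s,u}"] RT_len[OF assms(1)] RT_len[OF assms(2)] RT_len[OF assms(3)] by simp
  then have "card {l\<in>SS d. ip r l = 0 \<and> ip s l = 0 \<and> ip u l = 0} = card {l\<in>SS d. ip R0 l = 0 \<and> ip P2 l = 0 \<and> ip U0 l = 0}" using g(2,3,4) by simp
  also have "{l\<in>SS d. ip R0 l = 0 \<and> ip P2 l = 0 \<and> ip U0 l = 0} = {l\<in>SS d. l!0 = 0 \<and> l!1 = 0 \<and> l!2 = 0}"
    by (auto simp: ip_R0 ip_P2 ip_U0)
  finally show ?thesis using D5_bij by (simp add: NL_def)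
qed

definition Rl :: "real list \<Rightarrow> real list set" where "Rl l = {r\<in>RT. ip r l = 0}"
definition bm :: "real list \<Rightarrow> real list \<Rightarrow> real list set" where "bm l r = {s\<in>Rl l. ip r s = -1}"
definition bp :: "real list \<Rightarrow> real list \<Rightarrow> real list set" where "bp l r = {s\<in>Rl l. ip r s = 1}"
definition zz :: "real list \<Rightarrow> real list \<Rightarrow> real list set" where "zz l r = {s\<in>Rl l. ip r s = 0}"
definition tt :: "real list \<Rightarrow> real list \<Rightarrow> (real list \<times> real list) set" where
  "tt l r = Sigma (bm l r) (\<lambda>s. {u\<in>Rl l. ip s u = -1 \<and> ip r u = 0})"

lemma finite_Rl: "finite (Rl l)" unfolding Rl_def using finite_RT by simp
lemma Rl_RT: "x \<in> Rl l \<Longrightarrow> x \<in> RT" by (simp add: Rl_def)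
lemma Rl_len: "x \<in> Rl l \<Longrightarrow> length x = 8" by (simp add: Rl_def RT_len)

lemma Rl_vneg: "x \<in> Rl l \<Longrightarrow> vneg x \<in> Rl l"
  by (simp add: Rl_def RT_vneg ip_lin RT_len)
lemma Rl_vsub: "x \<in> Rl l \<Longrightarrow> y \<in> Rl l \<Longrightarrow> ip x y = 1 \<Longrightarrow> vsub x y \<in> Rl l"
  by (simp add: Rl_def RT_vsub ip_lin RT_len)
lemma Rl_vadd: "x \<in> Rl l \<Longrightarrow> y \<in> Rl l \<Longrightarrow> ip x y = -1 \<Longrightarrow> vadd x y \<in> Rl l"
  by (simp add: Rl_def RT_vadd ip_lin RT_len)

lemma card_Rl_le: assumes r: "r \<in> Rl l"
  shows "card (Rl l) \<le> 2 + 2 * card (bm l r) + card (zz l r)"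
proof -
  have rR: "r \<in> RT" using r by (simp add: Rl_def)
  have sub: "Rl l \<subseteq> {r, vneg r} \<union> bp l r \<union> bm l r \<union> zz l r"
  proof
    fix s assume s: "s \<in> Rl l"
    then have sR: "s \<in> RT" by (simp add: Rl_def)
    have "ip r s = -2 \<or> ip r s = -1 \<or> ip r s = 0 \<or> ip r s = 1 \<or> ip r s = 2" using ip_root_cases[OF rR sR] .
    then show "s \<in> {r, vneg r} \<union> bp l r \<union> bm l r \<union> zz l r"
      using ip_root_2[OF rR sR] ip_root_m2[OF rR sR] s by (auto simp: bp_def bm_def zz_def)
  qed
  have bpbm: "card (bp l r) \<le> card (bm l r)"
  proof -
    have "bp l r \<subseteq> vneg ` bm l r"
    proof
      fix s assume s: "s \<in> bp l r"
      then have "vneg s \<in> bm l r" using rR by (auto simp: bp_def bm_def Rl_vneg ip_lin RT_len Rl_len)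
      moreover have "length s = 8" using s Rl_len unfolding bp_def by blast
      then have "s = vneg (vneg s)" by (simp add: vneg_vneg)
      ultimately show "s \<in> vneg ` bm l r" by blast
    qed
    then have "card (bp l r) \<le> card (vneg ` bm l r)"
      by (intro card_mono) (auto simp: bm_def finite_Rl)
    also have "\<dots> \<le> card (bm l r)" by (rule card_image_le) (simp add: bm_def finite_Rl)
    finally show ?thesis .
  qed
  have "card (Rl l) \<le> card ({r, vneg r} \<union> bp l r \<union> bm l r \<union> zz l r)"
    using sub by (intro card_mono) (auto simp: bp_def bm_def zz_def finite_Rl)
  also have "\<dots> \<le> card ({r, vneg r} \<union> bp l r \<union> bm l r) + card (zz l r)" by (rule card_Un_le)
  also have "card ({r, vneg r} \<union> bp l r \<union> bm l r) \<le> card ({r, vneg r} \<union> bp l r) + card (bm l r)" by (rule card_Un_le)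
  also have "card ({r, vneg r} \<union> bp l r) \<le> card {r, vneg r} + card (bp l r)" by (rule card_Un_le)
  also have "card {r, vneg r} \<le> 2" by (cases "r = vneg r") simp_all
  finally show ?thesis using bpbm by linarith
qed

definition sg :: "real list \<Rightarrow> real list \<Rightarrow> real list" where "sg r s = vadd (vneg r) (vneg s)"

lemma bm_Rl: "s \<in> bm l r \<Longrightarrow> s \<in> Rl l" by (simp add: bm_def)
lemma bm_ip: "s \<in> bm l r \<Longrightarrow> ip r s = -1" by (simp add: bm_def)

lemma ip_sg_l: "length r = 8 \<Longrightarrow> length s = 8 \<Longrightarrow> ip (sg r s) x = - ip r x - ip s x"
  by (simp add: sg_def ip_lin)
lemma ip_sg_r: "length x = 8 \<Longrightarrow> ip x (sg r s) = - ip x r - ip x s"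
  by (simp add: sg_def ip_lin)

lemma sg_bm: assumes r: "r \<in> Rl l" and s: "s \<in> bm l r" shows "sg r s \<in> bm l r"
proof -
  have sR: "s \<in> Rl l" using s by (simp add: bm_def)
  have "ip (vneg r) (vneg s) = -1" using s r sR by (simp add: ip_lin Rl_len bm_def)
  then have "sg r s \<in> Rl l" unfolding sg_def using Rl_vadd Rl_vneg r sR by blast
  moreover have "ip r (sg r s) = -1" using s r sR Rl_len[OF r]
    by (simp add: ip_sg_r bm_def ip_self_RT Rl_RT)
  ultimately show ?thesis by (simp add: bm_def)
qed

lemma sg_sg: "length r = 8 \<Longrightarrow> length s = 8 \<Longrightarrow> sg r (sg r s) = s"
  by (rule vec_eqI) (auto simp: sg_def)

lemma Lip: assumes r: "r \<in> Rl l" and s1: "s1 \<in> bm l r" and y: "y \<in> bm l r"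
  and ne: "y \<noteq> s1" "y \<noteq> sg r s1"
  shows "ip s1 y = 0 \<or> ip s1 y = 1"
proof -
  have rR: "r \<in> RT" using r by (simp add: Rl_def)
  have s1R: "s1 \<in> RT" and yR: "y \<in> RT" using s1 y by (auto simp: bm_def Rl_def)
  have l8: "length r = 8" "length s1 = 8" "length y = 8" using rR s1R yR RT_len by auto
  have c: "ip s1 y = -2 \<or> ip s1 y = -1 \<or> ip s1 y = 0 \<or> ip s1 y = 1 \<or> ip s1 y = 2" using ip_root_cases[OF s1R yR] .
  have n2: "ip s1 y \<noteq> 2" using ip_root_2[OF s1R yR] ne(1) by auto
  have nm2: "ip s1 y \<noteq> -2"
  proof
    assume "ip s1 y = -2"
    then have "y = vneg s1" using ip_root_m2[OF s1R yR] by simp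
    then have "ip r y = 1" using s1 l8 by (simp add: ip_lin bm_def)
    then show False using y by (simp add: bm_def)
  qed
  have nm1: "ip s1 y \<noteq> -1"
  proof
    assume a: "ip s1 y = -1"
    have vR: "vadd s1 y \<in> RT" using RT_vadd[OF s1R yR a] .
    have "ip r (vadd s1 y) = -2" using s1 y l8 by (simp add: ip_lin bm_def)
    then have e: "vadd s1 y = vneg r" using ip_root_m2[OF rR vR] by simp
    have "y = sg r s1"
    proof (rule vec_eqI)
      show "length y = 8" "length (sg r s1) = 8" using l8 by (auto simp: sg_def)
      show "\<forall>i<8. y ! i = sg r s1 ! i"
      proof (intro allI impI)
        fix i :: nat assume i: "i < 8"
        have "vadd s1 y ! i = vneg r ! i" using e by simp
        then show "y ! i = sg r s1 ! i" using i by (simp add: sg_def)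
      qed
    qed
    then show False using ne(2) by simp
  qed
  show ?thesis using c n2 nm2 nm1 by auto
qed

lemma pick: assumes r: "r \<in> Rl l" and s1: "s1 \<in> bm l r" and y: "y \<in> bm l r"
  and ne: "y \<noteq> s1" "y \<noteq> sg r s1"
  shows "\<exists>y'. y' \<in> bm l r \<and> ip s1 y' = 1 \<and> (y' = y \<or> y' = sg r y)"
proof -
  have l8: "length r = 8" "length s1 = 8" "length y = 8" using r s1 y by (auto simp: bm_def Rl_len)
  consider "ip s1 y = 1" | "ip s1 y = 0" using Lip[OF assms] by blast
  then show ?thesis
  proof cases
    case 1 then show ?thesis using y by blast
  next
    case 2
    have "ip s1 (sg r y) = 1" using 2 l8 s1 by (simp add: ip_sg_r ip_comm[of s1 r] bm_def)
    then show ?thesis using sg_bm[OF r y] by blast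
  qed
qed

lemma F1: assumes r: "r \<in> Rl l" and s1: "s1 \<in> bm l r" and y: "y \<in> bm l r" and iy: "ip s1 y = 1"
  shows "card (tt l r) \<ge> 4"
proof -
  have s1R: "s1 \<in> Rl l" and yR: "y \<in> Rl l" using s1 y by (auto simp: bm_def)
  have l8: "length r = 8" "length s1 = 8" "length y = 8" using r s1R yR by (auto simp: Rl_len)
  have rs1: "ip r s1 = -1" and ry: "ip r y = -1" using s1 y by (auto simp: bm_def)
  have s1s1: "ip s1 s1 = 2" and yy: "ip y y = 2" using s1R yR by (auto simp: ip_self_RT Rl_RT)
  have ys1: "ip y s1 = 1" using iy l8 by (simp add: ip_comm)
  define u where "u = vsub s1 y"
  have uR: "u \<in> Rl l" unfolding u_def using Rl_vsub[OF s1R yR iy] .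
  have ru: "ip r u = 0" unfolding u_def using l8 rs1 ry by (simp add: ip_lin)
  have nuR: "vneg u \<in> Rl l" using Rl_vneg[OF uR] .
  have rnu: "ip r (vneg u) = 0" using ru l8 by (simp add: ip_lin)
  have sg1: "sg r s1 \<in> bm l r" and sgy: "sg r y \<in> bm l r" using sg_bm r s1 y by auto
  let ?T = "{u\<in>Rl l. ip y u = -1 \<and> ip r u = 0}"
  have p1: "(y, u) \<in> tt l r" unfolding tt_def using y uR ru l8 yy ys1
    by (simp add: u_def ip_lin)
  have p2: "(sg r s1, u) \<in> tt l r" unfolding tt_def using sg1 uR ru l8 rs1 ry s1s1 iy
    by (simp add: u_def ip_lin ip_sg_l)
  have p3: "(s1, vneg u) \<in> tt l r" unfolding tt_def using s1 nuR rnu l8 s1s1 iy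
    by (simp add: u_def ip_lin)
  have p4: "(sg r y, vneg u) \<in> tt l r" unfolding tt_def using sgy nuR rnu l8 rs1 ry yy ys1
    by (simp add: u_def ip_lin ip_sg_l)
  define f where "f (p :: real list \<times> real list) = ip s1 (fst p)" for p
  have "f ` {(y, u), (sg r s1, u), (s1, vneg u), (sg r y, vneg u)} = {1, -1, 2, 0}"
    unfolding f_def using l8 iy s1s1 rs1 by (simp add: ip_sg_r ip_comm[of s1 r])
  then have "card {1, -1, 2, 0::real} \<le> card {(y, u), (sg r s1, u), (s1, vneg u), (sg r y, vneg u)}"
    by (metis card_image_le finite.emptyI finite.insertI)
  also have "\<dots> \<le> card (tt l r)"
  proof (rule card_mono)
    show "finite (tt l r)" unfolding tt_def by (intro finite_SigmaI) (auto simp: bm_def finite_Rl)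
    show "{(y, u), (sg r s1, u), (s1, vneg u), (sg r y, vneg u)} \<subseteq> tt l r" using p1 p2 p3 p4 by auto
  qed
  finally show ?thesis by simp
qed

lemma F2: assumes r: "r \<in> Rl l" and s1: "s1 \<in> bm l r" and y2: "y2 \<in> bm l r" and y3: "y3 \<in> bm l r"
  and i2: "ip s1 y2 = 1" and i3: "ip s1 y3 = 1" and ne: "y2 \<noteq> y3"
  shows "card (zz l r) \<ge> 4"
proof -
  have s1R: "s1 \<in> Rl l" and y2R: "y2 \<in> Rl l" and y3R: "y3 \<in> Rl l" using s1 y2 y3 by (auto simp: bm_def)
  have l8: "length r = 8" "length s1 = 8" "length y2 = 8" "length y3 = 8" using r s1R y2R y3R by (auto simp: Rl_len)
  have rs1: "ip r s1 = -1" and ry2: "ip r y2 = -1" and ry3: "ip r y3 = -1" using s1 y2 y3 by (auto simp: bm_def)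
  have s1s1: "ip s1 s1 = 2" and yy: "ip y2 y2 = 2" using s1R y2R by (auto simp: ip_self_RT Rl_RT)
  have y2s1: "ip y2 s1 = 1" using i2 l8 by (simp add: ip_comm)
  have c2: "ip y2 y3 \<noteq> 2" using ip_root_2[OF Rl_RT[OF y2R] Rl_RT[OF y3R]] ne by auto
  define u2 where "u2 = vsub s1 y2"
  define u3 where "u3 = vsub s1 y3"
  have u2R: "u2 \<in> Rl l" unfolding u2_def using Rl_vsub[OF s1R y2R i2] .
  have u3R: "u3 \<in> Rl l" unfolding u3_def using Rl_vsub[OF s1R y3R i3] .
  have z1: "u2 \<in> zz l r" "u3 \<in> zz l r" "vneg u2 \<in> zz l r" "vneg u3 \<in> zz l r"
    using u2R u3R Rl_vneg l8 rs1 ry2 ry3 by (auto simp: zz_def u2_def u3_def ip_lin)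
  define f where "f x = (ip s1 x, ip y2 x)" for x
  have "f ` {u2, u3, vneg u2, vneg u3} = {(1,-1), (1, 1 - ip y2 y3), (-1, 1), (-1, ip y2 y3 - 1)}"
    unfolding f_def u2_def u3_def using l8 i2 i3 s1s1 yy y2s1 by (simp add: ip_lin)
  moreover have "card {(1::real,-1::real), (1, 1 - ip y2 y3), (-1, 1), (-1, ip y2 y3 - 1)} = 4"
    using c2 by auto
  ultimately have "4 \<le> card {u2, u3, vneg u2, vneg u3}"
    by (metis card_image_le finite.emptyI finite.insertI)
  also have "\<dots> \<le> card (zz l r)"
    by (rule card_mono) (use z1 in \<open>auto simp: zz_def finite_Rl\<close>)
  finally show ?thesis .
qed

lemma finite_bm: "finite (bm l r)" by (simp add: bm_def finite_Rl)

lemma card_pair_le: "card {a, b} \<le> 2" by (cases "a = b") simp_all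

lemma card_diff2: assumes "finite A" shows "card (A - {a, b}) \<ge> card A - 2"
proof -
  have "card A - card {a, b} \<le> card (A - {a, b})" by (rule diff_card_le_card_Diff) simp
  then show ?thesis using card_pair_le[of a b] by linarith
qed

lemma ne_of_card: "card A \<ge> 1 \<Longrightarrow> \<exists>x. x \<in> A"
  by (metis card.empty ex_in_conv not_one_le_zero)

lemma E1: assumes "card (bm l r) \<ge> 3"
  shows "\<exists>s1 y. s1 \<in> bm l r \<and> y \<in> bm l r \<and> y \<noteq> s1 \<and> y \<noteq> sg r s1"
proof -
  obtain s1 where s1: "s1 \<in> bm l r" using ne_of_card assms by (metis le_trans one_le_numeral)
  have "card (bm l r - {s1, sg r s1}) \<ge> 1" using card_diff2[OF finite_bm, of l r s1 "sg r s1"] assms by linarith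
  then obtain y where "y \<in> bm l r - {s1, sg r s1}" using ne_of_card by blast
  then show ?thesis using s1 by blast
qed

lemma E2: assumes "card (bm l r) \<ge> 5"
  shows "\<exists>s1 s2 s3. s1 \<in> bm l r \<and> s2 \<in> bm l r \<and> s3 \<in> bm l r \<and> s2 \<noteq> s1 \<and> s2 \<noteq> sg r s1
     \<and> s3 \<noteq> s1 \<and> s3 \<noteq> sg r s1 \<and> s3 \<noteq> s2 \<and> s3 \<noteq> sg r s2"
proof -
  obtain s1 where s1: "s1 \<in> bm l r" using ne_of_card assms by (metis le_trans one_le_numeral)
  let ?B = "bm l r - {s1, sg r s1}"
  have cB: "card ?B \<ge> 3" using card_diff2[OF finite_bm, of l r s1 "sg r s1"] assms by linarith
  then obtain s2 where s2: "s2 \<in> ?B" using ne_of_card by (metis le_trans one_le_numeral)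
  have "card (?B - {s2, sg r s2}) \<ge> 1" using card_diff2[of ?B s2 "sg r s2"] cB finite_bm by auto
  then obtain s3 where "s3 \<in> ?B - {s2, sg r s2}" using ne_of_card by blast
  then show ?thesis using s1 s2 by blast
qed

lemma finite_zz: "finite (zz l r)" by (simp add: zz_def finite_Rl)
lemma finite_tt: "finite (tt l r)" unfolding tt_def by (intro finite_SigmaI) (auto simp: finite_bm finite_Rl)

lemma t4: assumes r: "r \<in> Rl l" and b: "card (bm l r) \<ge> 3" shows "card (tt l r) \<ge> 4"
proof -
  obtain s1 y where sy: "s1 \<in> bm l r" "y \<in> bm l r" "y \<noteq> s1" "y \<noteq> sg r s1" using E1[OF b] by blast
  obtain y' where "y' \<in> bm l r" "ip s1 y' = 1" using pick[OF r sy] by blast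
  then show ?thesis using F1[OF r sy(1)] by blast
qed

lemma c4: assumes r: "r \<in> Rl l" and b: "card (bm l r) \<ge> 5" shows "card (zz l r) \<ge> 4"
proof -
  obtain s1 s2 s3 where s: "s1 \<in> bm l r" "s2 \<in> bm l r" "s3 \<in> bm l r" "s2 \<noteq> s1" "s2 \<noteq> sg r s1"
     "s3 \<noteq> s1" "s3 \<noteq> sg r s1" "s3 \<noteq> s2" "s3 \<noteq> sg r s2" using E2[OF b] by blast
  obtain y2 where y2: "y2 \<in> bm l r" "ip s1 y2 = 1" "y2 = s2 \<or> y2 = sg r s2" using pick[OF r s(1) s(2) s(4) s(5)] by blast
  obtain y3 where y3: "y3 \<in> bm l r" "ip s1 y3 = 1" "y3 = s3 \<or> y3 = sg r s3" using pick[OF r s(1) s(3) s(6) s(7)] by blast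
  have l8: "length r = 8" "length s2 = 8" "length s3 = 8" using r s(2,3) by (auto simp: Rl_len bm_def)
  have "y2 \<noteq> y3"
  proof
    assume e: "y2 = y3"
    have "s3 = s2 \<or> s3 = sg r s2"
      using y2(3) y3(3) e sg_sg[OF l8(1) l8(2)] sg_sg[OF l8(1) l8(3)] by metis
    then show False using s(8,9) by blast
  qed
  then show ?thesis using F2[OF r s(1) y2(1) y3(1) y2(2) y3(2)] by blast
qed

lemma pointwise: assumes r: "r \<in> Rl l" and A: "card (Rl l) \<ge> 14"
  shows "card (bm l r) + card (zz l r) \<ge> 8"
    and "2 * card (bm l r) + 2 * card (zz l r) + card (tt l r) \<ge> 20"
proof -
  have le: "card (Rl l) \<le> 2 + 2 * card (bm l r) + card (zz l r)" using card_Rl_le[OF r] .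
  have t: "card (bm l r) \<ge> 3 \<Longrightarrow> card (tt l r) \<ge> 4" using t4[OF r] by blast
  have c: "card (bm l r) \<ge> 5 \<Longrightarrow> card (zz l r) \<ge> 4" using c4[OF r] by blast
  show "card (bm l r) + card (zz l r) \<ge> 8" using le A c by linarith
  show "2 * card (bm l r) + 2 * card (zz l r) + card (tt l r) \<ge> 20" using le A c t by linarith
qed

lemma even_inv: assumes "finite A" "\<forall>x\<in>A. f x \<in> A \<and> f x \<noteq> x \<and> f (f x) = x"
  shows "even (card A)"
  using assms
proof (induction "card A" arbitrary: A rule: less_induct)
  case less
  show ?case
  proof (cases "A = {}")
    case True then show ?thesis by simp
  next
    case False
    then obtain x where x: "x \<in> A" by blast
    let ?A = "A - {x, f x}"
    have fx: "f x \<in> A" "f x \<noteq> x" using less.prems x by auto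
    have c: "card A = card ?A + 2"
    proof -
      have "card ?A = card A - card {x, f x}" using less.prems(1) x fx by (intro card_Diff_subset) auto
      moreover have "card {x, f x} = 2" using fx by simp
      moreover have "card A \<ge> 2" using card_mono[OF less.prems(1), of "{x, f x}"] x fx by simp
      ultimately show ?thesis by simp
    qed
    have "even (card ?A)"
    proof (rule less.hyps)
      show "card ?A < card A" using c by simp
      show "finite ?A" using less.prems by simp
      show "\<forall>y\<in>?A. f y \<in> ?A \<and> f y \<noteq> y \<and> f (f y) = y"
      proof
        fix y assume y: "y \<in> ?A"
        have h: "f y \<in> A" "f y \<noteq> y" "f (f y) = y" using less.prems y by auto
        have hx: "f (f x) = x" using less.prems x by auto
        have "f y \<noteq> x" using h hx y by auto
        moreover have "f y \<noteq> f x" using h y by (metis DiffD2 hx insertCI)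
        ultimately show "f y \<in> ?A \<and> f y \<noteq> y \<and> f (f y) = y" using h by auto
      qed
    qed
    then show ?thesis using c by simp
  qed
qed

lemma Rl_even: "even (card (Rl l))"
proof (rule even_inv[OF finite_Rl, of _ vneg], intro ballI conjI)
  fix x assume x: "x \<in> Rl l"
  have l8: "length x = 8" using Rl_len[OF x] .
  show "vneg x \<in> Rl l" using Rl_vneg[OF x] .
  show "vneg (vneg x) = x" using vneg_vneg[OF l8] .
  show "vneg x \<noteq> x"
  proof
    assume "vneg x = x"
    then have "ip x (vneg x) = ip x x" by simp
    then show False using l8 ip_self_RT[OF Rl_RT[OF x]] by (simp add: ip_lin)
  qed
qed

lemma Rl_not1: "card (Rl l) \<noteq> 1" using Rl_even[of l] by presburger

lemma swap_card: assumes "finite S" "finite T"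
  shows "(\<Sum>l\<in>S. card {p\<in>T. P l p}) = (\<Sum>p\<in>T. card {l\<in>S. P l p})"
proof -
  have "(\<Sum>l\<in>S. card {p\<in>T. P l p}) = (\<Sum>l\<in>S. \<Sum>p\<in>T. if P l p then 1 else 0)"
    using assms by (simp add: sum.inter_filter[symmetric])
  also have "\<dots> = (\<Sum>p\<in>T. \<Sum>l\<in>S. if P l p then 1 else 0)" by (rule sum.swap)
  also have "\<dots> = (\<Sum>p\<in>T. card {l\<in>S. P l p})"
    using assms by (simp add: sum.inter_filter[symmetric])
  finally show ?thesis .
qed

lemma int_sq_bound: assumes "(x::int)*x \<le> B" shows "x \<le> B" "-B \<le> x"
proof -
  have "\<bar>x\<bar> \<le> x * x"
  proof (cases "x = 0")
    case True then show ?thesis by simp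
  next
    case False
    then have "1 \<le> \<bar>x\<bar>" by simp
    then have "1 * \<bar>x\<bar> \<le> \<bar>x\<bar> * \<bar>x\<bar>" by (intro mult_right_mono) auto
    then show ?thesis by (simp add: abs_mult_self_eq)
  qed
  then show "x \<le> B" "-B \<le> x" using assms by linarith+
qed

lemma finite_SS: "finite (SS d)"
proof -
  let ?M = "int (8*d)"
  have "SS d \<subseteq> hv ` {k. set k \<subseteq> {-?M..?M} \<and> length k = 8}"
  proof
    fix l assume l: "l \<in> SS d"
    then have E: "l \<in> E8" and sq: "sqn l = real (2*d)" by (auto simp: SS_def)
    have l8: "length l = 8" using E by (simp add: E8_iff)
    have e: "hv (kv l) = l" using E8_hv[OF E] .
    have "set (kv l) \<subseteq> {-?M..?M}"
    proof
      fix x assume "x \<in> set (kv l)"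
      then obtain i where i: "i < 8" "x = kv l ! i" using l8 by (auto simp: kv_def in_set_conv_nth)
      have "hv (kv l) ! i = l ! i" using e by simp
      then have xi: "of_int x = 2 * l!i" using i l8 by (simp add: hv_def kv_def)
      have "l!i * l!i \<le> (\<Sum>j<8. l!j * l!j)"
        using i by (intro member_le_sum) auto
      then have "l!i * l!i \<le> real (2*d)" using sq l8 by (simp add: sqn_def ip8)
      then have "of_int (x*x) \<le> (of_int (int (8*d)) :: real)" using xi by simp
      then have "x*x \<le> int (8*d)" by (simp only: of_int_le_iff)
      then show "x \<in> {-?M..?M}" using int_sq_bound[of x] by auto
    qed
    moreover have "length (kv l) = 8" using l8 by (simp add: kv_def)
    ultimately show "l \<in> hv ` {k. set k \<subseteq> {-?M..?M} \<and> length k = 8}" using e by force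
  qed
  moreover have "finite (hv ` {k. set k \<subseteq> {-?M..?M} \<and> length k = 8})"
    by (intro finite_imageI finite_lists_length_eq) simp
  ultimately show ?thesis by (rule finite_subset)
qed

definition "A2 = Sigma RT (\<lambda>r. {s\<in>RT. ip r s = -1})"
definition "O2 = Sigma RT (\<lambda>r. {s\<in>RT. ip r s = 0})"
definition "A3 = Sigma RT (\<lambda>r. Sigma {s\<in>RT. ip r s = -1} (\<lambda>s. {u\<in>RT. ip s u = -1 \<and> ip r u = 0}))"

lemma fin_A2: "finite A2" unfolding A2_def using finite_RT by auto
lemma fin_O2: "finite O2" unfolding O2_def using finite_RT by auto
lemma fin_A3: "finite A3" unfolding A3_def using finite_RT by (intro finite_SigmaI) auto

lemma card_A2: "card A2 \<le> card RT * 56"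
proof -
  have "card A2 = (\<Sum>r\<in>RT. card {s\<in>RT. ip r s = -1})" unfolding A2_def using finite_RT by (simp add: card_SigmaI)
  also have "\<dots> \<le> (\<Sum>r\<in>RT. 56)" by (rule sum_mono) (rule C2)
  finally show ?thesis by simp
qed

lemma card_O2: "card O2 \<le> card RT * 126"
proof -
  have "card O2 = (\<Sum>r\<in>RT. card {s\<in>RT. ip r s = 0})" unfolding O2_def using finite_RT by (simp add: card_SigmaI)
  also have "\<dots> \<le> (\<Sum>r\<in>RT. 126)" by (rule sum_mono) (rule C0)
  finally show ?thesis by simp
qed

lemma card_A3: "card A3 \<le> card RT * 1512"
proof -
  have "card A3 = (\<Sum>r\<in>RT. card (Sigma {s\<in>RT. ip r s = -1} (\<lambda>s. {u\<in>RT. ip s u = -1 \<and> ip r u = 0})))"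
    unfolding A3_def using finite_RT by (intro card_SigmaI) (auto intro: finite_SigmaI)
  also have "\<dots> \<le> (\<Sum>r\<in>RT. 1512)"
  proof (rule sum_mono)
    fix r assume r: "r \<in> RT"
    have "card (Sigma {s\<in>RT. ip r s = -1} (\<lambda>s. {u\<in>RT. ip s u = -1 \<and> ip r u = 0}))
        = (\<Sum>s\<in>{s\<in>RT. ip r s = -1}. card {u\<in>RT. ip s u = -1 \<and> ip r u = 0})"
      using finite_RT by (intro card_SigmaI) auto
    also have "\<dots> \<le> (\<Sum>s\<in>{s\<in>RT. ip r s = -1}. 27)" by (rule sum_mono) (use C3 r in auto)
    also have "\<dots> = 27 * card {s\<in>RT. ip r s = -1}" by simp
    also have "\<dots> \<le> 27 * 56" using C2[OF r] by simp
    finally show "card (Sigma {s\<in>RT. ip r s = -1} (\<lambda>s. {u\<in>RT. ip s u = -1 \<and> ip r u = 0})) \<le> 1512" by simp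
  qed
  finally show ?thesis by simp
qed

lemma sumA: "(\<Sum>l\<in>SS d. card (Rl l)) = card RT * NL E7 (2*d)"
proof -
  have "(\<Sum>l\<in>SS d. card (Rl l)) = (\<Sum>l\<in>SS d. card {r\<in>RT. ip r l = 0})" by (simp add: Rl_def)
  also have "\<dots> = (\<Sum>r\<in>RT. card {l\<in>SS d. ip r l = 0})" by (rule swap_card[OF finite_SS finite_RT])
  also have "\<dots> = (\<Sum>r\<in>RT. NL E7 (2*d))" by (rule sum.cong) (simp_all add: N1)
  finally show ?thesis by simp
qed

lemma sumB: "(\<Sum>l\<in>SS d. card (Sigma (Rl l) (bm l))) = card A2 * NL E6 (2*d)"
proof -
  have e: "Sigma (Rl l) (bm l) = {p\<in>A2. ip (fst p) l = 0 \<and> ip (snd p) l = 0}" for l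
    by (auto simp: A2_def Rl_def bm_def)
  have "(\<Sum>l\<in>SS d. card (Sigma (Rl l) (bm l))) = (\<Sum>l\<in>SS d. card {p\<in>A2. ip (fst p) l = 0 \<and> ip (snd p) l = 0})"
    by (simp add: e)
  also have "\<dots> = (\<Sum>p\<in>A2. card {l\<in>SS d. ip (fst p) l = 0 \<and> ip (snd p) l = 0})" by (rule swap_card[OF finite_SS fin_A2])
  also have "\<dots> = (\<Sum>p\<in>A2. NL E6 (2*d))" by (rule sum.cong) (auto simp: A2_def intro!: N2)
  finally show ?thesis by simp
qed

lemma sumC: "(\<Sum>l\<in>SS d. card (Sigma (Rl l) (zz l))) = card O2 * NL D6 (2*d)"
proof -
  have e: "Sigma (Rl l) (zz l) = {p\<in>O2. ip (fst p) l = 0 \<and> ip (snd p) l = 0}" for l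
    by (auto simp: O2_def Rl_def zz_def)
  have "(\<Sum>l\<in>SS d. card (Sigma (Rl l) (zz l))) = (\<Sum>l\<in>SS d. card {p\<in>O2. ip (fst p) l = 0 \<and> ip (snd p) l = 0})"
    by (simp add: e)
  also have "\<dots> = (\<Sum>p\<in>O2. card {l\<in>SS d. ip (fst p) l = 0 \<and> ip (snd p) l = 0})" by (rule swap_card[OF finite_SS fin_O2])
  also have "\<dots> = (\<Sum>p\<in>O2. NL D6 (2*d))" by (rule sum.cong) (auto simp: O2_def intro!: N0)
  finally show ?thesis by simp
qed

lemma sumT: "(\<Sum>l\<in>SS d. card (Sigma (Rl l) (tt l))) = card A3 * NL D5 (2*d)"
proof -
  have e: "Sigma (Rl l) (tt l) = {x\<in>A3. ip (fst x) l = 0 \<and> ip (fst (snd x)) l = 0 \<and> ip (snd (snd x)) l = 0}" for l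
    by (auto simp: A3_def Rl_def bm_def tt_def)
  have "(\<Sum>l\<in>SS d. card (Sigma (Rl l) (tt l))) = (\<Sum>l\<in>SS d. card {x\<in>A3. ip (fst x) l = 0 \<and> ip (fst (snd x)) l = 0 \<and> ip (snd (snd x)) l = 0})"
    by (simp add: e)
  also have "\<dots> = (\<Sum>x\<in>A3. card {l\<in>SS d. ip (fst x) l = 0 \<and> ip (fst (snd x)) l = 0 \<and> ip (snd (snd x)) l = 0})"
    by (rule swap_card[OF finite_SS fin_A3])
  also have "\<dots> = (\<Sum>x\<in>A3. NL D5 (2*d))" by (rule sum.cong) (auto simp: A3_def intro!: N3)
  finally show ?thesis by simp
qed

lemma pw_sum: assumes "card (Rl l) = 0 \<or> card (Rl l) \<ge> 14"
  shows "8 * card (Rl l) \<le> card (Sigma (Rl l) (bm l)) + card (Sigma (Rl l) (zz l))"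
    and "20 * card (Rl l) \<le> 2 * card (Sigma (Rl l) (bm l)) + 2 * card (Sigma (Rl l) (zz l)) + card (Sigma (Rl l) (tt l))"
proof -
  have sb: "card (Sigma (Rl l) (bm l)) = (\<Sum>r\<in>Rl l. card (bm l r))" using finite_Rl finite_bm by (intro card_SigmaI) auto
  have sz: "card (Sigma (Rl l) (zz l)) = (\<Sum>r\<in>Rl l. card (zz l r))" using finite_Rl finite_zz by (intro card_SigmaI) auto
  have st: "card (Sigma (Rl l) (tt l)) = (\<Sum>r\<in>Rl l. card (tt l r))" using finite_Rl finite_tt by (intro card_SigmaI) auto
  show "8 * card (Rl l) \<le> card (Sigma (Rl l) (bm l)) + card (Sigma (Rl l) (zz l))"
  proof (cases "card (Rl l) = 0")
    case True then show ?thesis by simp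
  next
    case False
    then have A: "card (Rl l) \<ge> 14" using assms by simp
    have "8 * card (Rl l) = (\<Sum>r\<in>Rl l. 8)" by simp
    also have "\<dots> \<le> (\<Sum>r\<in>Rl l. card (bm l r) + card (zz l r))" by (rule sum_mono) (use pointwise(1)[OF _ A] in auto)
    finally show ?thesis unfolding sb sz by (simp add: sum.distrib)
  qed
  show "20 * card (Rl l) \<le> 2 * card (Sigma (Rl l) (bm l)) + 2 * card (Sigma (Rl l) (zz l)) + card (Sigma (Rl l) (tt l))"
  proof (cases "card (Rl l) = 0")
    case True then show ?thesis by simp
  next
    case False
    then have A: "card (Rl l) \<ge> 14" using assms by simp
    have "20 * card (Rl l) = (\<Sum>r\<in>Rl l. 20)" by simp
    also have "\<dots> \<le> (\<Sum>r\<in>Rl l. 2 * card (bm l r) + 2 * card (zz l r) + card (tt l r))" by (rule sum_mono) (use pointwise(2)[OF _ A] in auto)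
    finally show ?thesis unfolding sb sz st by (simp add: sum.distrib sum_distrib_left)
  qed
qed

theorem theorem7p3:
  fixes d :: nat
  assumes "d > 0"
  assumes "4 * NL E7 (2*d) > 28 * NL E6 (2*d) + 63 * NL D6 (2*d) \<or>
           5 * NL E7 (2*d) > 28 * NL E6 (2*d) + 63 * NL D6 (2*d) + 378 * NL D5 (2*d)"
  shows "\<exists>l \<in> E8. sqn l = real (2*d) \<and>
           2 \<le> card {r \<in> roots E8. ip r l = 0} \<and> card {r \<in> roots E8. ip r l = 0} \<le> 12"
proof (rule ccontr)
  assume na: "\<not> ?thesis"
  have h: "card (Rl l) = 0 \<or> card (Rl l) \<ge> 14" if l: "l \<in> SS d" for l
  proof -
    have "\<not> (2 \<le> card (Rl l) \<and> card (Rl l) \<le> 12)" using na l by (auto simp: SS_def Rl_def)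
    moreover have "card (Rl l) \<noteq> 1" by (rule Rl_not1)
    moreover have "card (Rl l) \<noteq> 13" using Rl_even[of l] by presburger
    ultimately show ?thesis by linarith
  qed
  let ?n = "card RT"
  let ?N7 = "NL E7 (2*d)" and ?N6 = "NL E6 (2*d)" and ?N0 = "NL D6 (2*d)" and ?N5 = "NL D5 (2*d)"
  have npos: "?n > 0" using finite_RT RT_eq by (simp add: RIlit_def card_gt_0_iff)
  have s1: "8 * (?n * ?N7) \<le> card A2 * ?N6 + card O2 * ?N0"
  proof -
    have "(\<Sum>l\<in>SS d. 8 * card (Rl l)) = 8 * (\<Sum>l\<in>SS d. card (Rl l))" by (rule sum_distrib_left[symmetric])
    then have "8 * (?n * ?N7) = (\<Sum>l\<in>SS d. 8 * card (Rl l))" by (simp add: sumA)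
    also have "\<dots> \<le> (\<Sum>l\<in>SS d. card (Sigma (Rl l) (bm l)) + card (Sigma (Rl l) (zz l)))"
      by (rule sum_mono) (use pw_sum(1) h in blast)
    also have "\<dots> = card A2 * ?N6 + card O2 * ?N0" by (simp add: sum.distrib sumB sumC)
    finally show ?thesis .
  qed
  have s2: "20 * (?n * ?N7) \<le> 2 * (card A2 * ?N6) + 2 * (card O2 * ?N0) + card A3 * ?N5"
  proof -
    have "(\<Sum>l\<in>SS d. 20 * card (Rl l)) = 20 * (\<Sum>l\<in>SS d. card (Rl l))" by (rule sum_distrib_left[symmetric])
    then have "20 * (?n * ?N7) = (\<Sum>l\<in>SS d. 20 * card (Rl l))" by (simp add: sumA)
    also have "\<dots> \<le> (\<Sum>l\<in>SS d. 2 * card (Sigma (Rl l) (bm l)) + 2 * card (Sigma (Rl l) (zz l)) + card (Sigma (Rl l) (tt l)))"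
      by (rule sum_mono) (use pw_sum(2) h in blast)
    also have "\<dots> = 2 * (\<Sum>l\<in>SS d. card (Sigma (Rl l) (bm l))) + 2 * (\<Sum>l\<in>SS d. card (Sigma (Rl l) (zz l))) + (\<Sum>l\<in>SS d. card (Sigma (Rl l) (tt l)))"
      by (simp add: sum.distrib sum_distrib_left)
    also have "\<dots> = 2 * (card A2 * ?N6) + 2 * (card O2 * ?N0) + card A3 * ?N5"
      by (simp only: sumB sumC sumT)
    finally show ?thesis .
  qed
  have b2: "card A2 * ?N6 \<le> ?n * 56 * ?N6" using card_A2 by (rule mult_right_mono) simp
  have b0: "card O2 * ?N0 \<le> ?n * 126 * ?N0" using card_O2 by (rule mult_right_mono) simp
  have b3: "card A3 * ?N5 \<le> ?n * 1512 * ?N5" using card_A3 by (rule mult_right_mono) simp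
  have i1: "?n * (8 * ?N7) \<le> ?n * (56 * ?N6 + 126 * ?N0)"
  proof -
    have "?n * (8 * ?N7) = 8 * (?n * ?N7)" by simp
    moreover have "?n * (56 * ?N6 + 126 * ?N0) = ?n * 56 * ?N6 + ?n * 126 * ?N0" by (simp add: algebra_simps)
    ultimately show ?thesis using s1 b2 b0 by linarith
  qed
  have i2: "?n * (20 * ?N7) \<le> ?n * (112 * ?N6 + 252 * ?N0 + 1512 * ?N5)"
  proof -
    have "?n * (20 * ?N7) = 20 * (?n * ?N7)" by simp
    moreover have "?n * (112 * ?N6 + 252 * ?N0 + 1512 * ?N5) = 2 * (?n * 56 * ?N6) + 2 * (?n * 126 * ?N0) + ?n * 1512 * ?N5"
      by (simp add: algebra_simps)
    ultimately show ?thesis using s2 b2 b0 b3 by linarith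
  qed
  have j1: "8 * ?N7 \<le> 56 * ?N6 + 126 * ?N0" using i1 npos by simp
  have j2: "20 * ?N7 \<le> 112 * ?N6 + 252 * ?N0 + 1512 * ?N5" using i2 npos by simp
  show False using assms(2) j1 j2 by linarith
qed

end
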